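(* Let $i\ge 3$ and $k\ge 3$ be integers. Then: (a) $g_2(L_i,L_{i+2},L_{i+k})=(3L_i-1)L_{i+2}-L_i$ whenever $k\ge i+4$; (b) $g_2(L_i,L_{i+2},L_{2i+3})=(L_i-1)L_{i+2}+L_{2i+3}-L_i$; (c) $g_2(L_i,L_{i+2},L_{2i+2})=(L_i-1)L_{i+2}+L_{2i+2}-L_i$ if $i$ is odd, and $g_2(L_i,L_{i+2},L_{2i+2})=(2L_i-1)L_{i+2}-L_i$ if $i$ is even; (d) $g_2(L_i,L_{i+2},L_{2i+1})=(2F_{i-1}-1)L_{i+2}+2L_{2i+1}-L_i$; (e) $g_2(L_3,L_5,L_6)=L_5+3L_6-L_3=61$; (f) if $r=\lfloor (L_i-1)/F_k\rfloor\ge 2$ (which holds exactly when $k\le i$ and $(i,k)\ne(3,3)$), then $$g_2(L_i,L_{i+2},L_{i+k})=\begin{cases}(L_i-rF_k-1)L_{i+2}+(r+2)L_{i+k}-L_i & \text{if } (L_i-rF_k)L_{i+2}\ge F_{k-2}L_i,\\ (F_k-1)L_{i+2}+(r+1)L_{i+k}-L_i & \text{if } (L_i-rF_k)L_{i+2}< F_{k-2}L_i.\end{cases}$$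
   Context: Fibonacci numbers: $F_0=0$, $F_1=1$, $F_n=F_{n-1}+F_{n-2}$. Lucas numbers: $L_0=2$, $L_1=1$, $L_n=L_{n-1}+L_{n-2}$. For positive integers $a_1,\dots,a_l$ with $\gcd(a_1,\dots,a_l)=1$ and an integer $n$, let $d(n;a_1,\dots,a_l)$ be the number of tuples $(x_1,\dots,x_l)$ of nonnegative integers with $a_1x_1+\dots+a_lx_l=n$. For a nonnegative integer $p$, the $p$-Frobenius number $g_p(a_1,\dots,a_l)$ is the largest integer $n$ with $d(n;a_1,\dots,a_l)\le p$. *)

theory Defs
  imports "HOL-Number_Theory.Fib"
begin

fun lucas :: "nat \<Rightarrow> nat" where
  "lucas 0 = 2"
| "lucas (Suc 0) = 1"
| "lucas (Suc (Suc n)) = lucas (Suc n) + lucas n"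

definition num_reps :: "int \<Rightarrow> nat list \<Rightarrow> nat" where
  "num_reps n as = card {xs :: nat list. length xs = length as \<and>
       int (\<Sum>j<length as. as ! j * xs ! j) = n}"

definition p_frobenius :: "nat \<Rightarrow> nat list \<Rightarrow> int" where
  "p_frobenius p as = (GREATEST n :: int. num_reps n as \<le> p)"

end

theory Submission
  imports Defs "HOL-Number_Theory.Cong"
begin


lemma lucas_fib2: "lucas (Suc n) = fib n + fib (Suc (Suc n)) \<and> lucas (Suc (Suc n)) = fib (Suc n) + fib (Suc (Suc (Suc n)))"
  by (induction n) auto

lemma lucas_Suc: "lucas (Suc n) = fib n + fib (Suc (Suc n))"
  using lucas_fib2 by blast

lemma lucas_rel: "lucas (i + k + 2) + fib k * lucas i = fib (k + 2) * lucas (i + 2)"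
proof (induction k rule: fib.induct)
  case 1 then show ?case by simp
next
  case 2 then show ?case by (simp add: numeral_eq_Suc)
next
  case (3 n)
  have e1: "lucas (i + Suc (Suc n) + 2) = lucas (i + Suc n + 2) + lucas (i + n + 2)"
    by (simp add: numeral_eq_Suc)
  have e2: "fib (Suc (Suc n) + 2) = fib (Suc n + 2) + fib (n + 2)" by (simp add: numeral_eq_Suc)
  show ?case using 3 by (simp only: e1 e2 fib.simps(3)) (simp add: algebra_simps)
qed

lemma coprime_lucas_Suc: "coprime (lucas n) (lucas (Suc n))"
proof (induction n)
  case 0 then show ?case by simp
next
  case (Suc n)
  have "gcd (lucas (Suc n)) (lucas (Suc (Suc n))) = gcd (lucas (Suc n)) (lucas n)"
    by (simp add: gcd.commute[of "lucas (Suc n)"])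
  then show ?case using Suc by (simp add: coprime_iff_gcd_eq_1 gcd.commute)
qed

lemma coprime_lucas2: "coprime (lucas n) (lucas (n+2))"
proof -
  have "gcd (lucas n) (lucas (n+2)) = gcd (lucas n) (lucas (Suc n))"
    by (simp add: numeral_eq_Suc) (metis gcd_add2 add.commute)
  then show ?thesis using coprime_lucas_Suc[of n] by (simp add: coprime_iff_gcd_eq_1)
qed


lemma fibj:
  "fib (j+2) = fib j + fib (j+1)"
  "fib (j+3) = fib j + 2*fib (j+1)"
  "fib (j+4) = 2*fib j + 3*fib (j+1)"
  "fib (j+5) = 3*fib j + 5*fib (j+1)"
  "fib (j+6) = 5*fib j + 8*fib (j+1)"
  "fib (j+7) = 8*fib j + 13*fib (j+1)"
  "fib (j+8) = 13*fib j + 21*fib (j+1)"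
  by (simp_all add: numeral_eq_Suc)

lemma lucj:
  "lucas (j+3) = 3*fib j + 4*fib (j+1)"
  "lucas (j+5) = 7*fib j + 11*fib (j+1)"
proof -
  have "lucas (j+3) = fib (j+2) + fib (j+4)" using lucas_Suc[of "j+2"] by (simp add: numeral_eq_Suc)
  then show "lucas (j+3) = 3*fib j + 4*fib (j+1)" by (simp add: fibj)
  have "lucas (j+5) = fib (j+4) + fib (j+6)" using lucas_Suc[of "j+4"] by (simp add: numeral_eq_Suc)
  then show "lucas (j+5) = 7*fib j + 11*fib (j+1)" by (simp add: fibj)
qed

lemma cassini_j: "int (fib (j+1))^2 - int (fib (j+1)) * int (fib j) - int (fib j)^2 = (-1)^j"
proof -
  have "int (fib (Suc (Suc j)) * fib j) - int((fib (Suc j))\<^sup>2) = - ((-1)^j)" by (rule fib_Cassini_int)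
  moreover have "fib (Suc (Suc j)) = fib j + fib (Suc j)" by simp
  ultimately show ?thesis by (simp add: algebra_simps power2_eq_square)
qed

lemma fibAB: "fib j \<le> fib (j+1)" "fib (j+1) \<ge> 1" "fib (j+1) \<le> 2 * fib j + 1"
proof -
  show "fib j \<le> fib (j+1)" by (rule fib_mono) simp
  show "fib (j+1) \<ge> 1" using fib_neq_0_nat[of "j+1"] by simp
  show "fib (j+1) \<le> 2 * fib j + 1"
  proof (cases j)
    case 0 then show ?thesis by simp
  next
    case (Suc n)
    have "fib (n+2) = fib (n+1) + fib n" by (simp add: numeral_eq_Suc)
    moreover have "fib n \<le> fib (n+1)" by (rule fib_mono) simp
    ultimately show ?thesis using Suc by simp
  qed
qed

lemma fib_rec2: assumes "k \<ge> 2" shows "fib k = fib (k-1) + fib (k-2)"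
proof -
  obtain m where "k = Suc (Suc m)" using assms by (metis add_2_eq_Suc le_Suc_ex)
  then show ?thesis by simp
qed


lemma ctx:
  assumes "i \<ge> 3"
  obtains A B where "A \<le> B" "1 \<le> B" "B \<le> 2*A+1"
    "lucas i = 3*A + 4*B" "lucas (i+2) = 7*A + 11*B"
    "fib (i-3) = A" "fib (i-2) = B" "fib (i-1) = A + B" "fib i = A + 2*B" "fib (i+1) = 2*A + 3*B"
    "fib (i+2) = 3*A + 5*B" "fib (i+3) = 5*A + 8*B" "fib (i+4) = 8*A + 13*B" "fib (i+5) = 13*A + 21*B"
    "i = 3 \<longleftrightarrow> A = 0"
proof -
  obtain j where ij: "i = j + 3" using assms by (metis add.commute le_Suc_ex)
  have e: "i-3 = j" "i-2 = j+1" "i-1 = j+2" "i+1 = j+4" "i+2 = j+5" "i+3 = j+6" "i+4 = j+7" "i+5 = j+8"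
    using ij by simp_all
  have z: "i = 3 \<longleftrightarrow> fib j = 0"
  proof
    assume "i = 3" then show "fib j = 0" using ij by simp
  next
    assume "fib j = 0" then have "j = 0" using fib_neq_0_nat[of j] by (cases j) auto
    then show "i = 3" using ij by simp
  qed
  have f: "fib (i-3) = fib j" "fib (i-2) = fib (j+1)" "fib (i-1) = fib (j+2)" "fib i = fib (j+3)"
    "fib (i+1) = fib (j+4)" "fib (i+2) = fib (j+5)" "fib (i+3) = fib (j+6)" "fib (i+4) = fib (j+7)"
    "fib (i+5) = fib (j+8)" "lucas i = lucas (j+3)" "lucas (i+2) = lucas (j+5)"
    by (simp_all only: e, simp_all add: ij)
  show ?thesis
    by (rule that[of "fib j" "fib (j+1)"]) (simp_all only: f fibAB lucj fibj z, simp_all)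
qed

lemma relk: assumes "k \<ge> 2" shows "lucas (i+k) + fib (k-2) * lucas i = fib k * lucas (i+2)"
proof -
  have h: "i + (k-2) + 2 = i + k" "k - 2 + 2 = k" using assms by simp_all
  show ?thesis using lucas_rel[of i "k-2"] by (simp only: h)
qed


definition R3 :: "nat \<Rightarrow> nat \<Rightarrow> nat \<Rightarrow> int \<Rightarrow> (nat\<times>nat\<times>nat) set" where
  "R3 a b c n = {(x,y,z). int (a*x+b*y+c*z) = n}"

lemma num_reps3: "num_reps n [a,b,c] = card (R3 a b c n)"
proof -
  have "{xs :: nat list. length xs = length [a,b,c] \<and>
       int (\<Sum>j<length [a,b,c]. [a,b,c] ! j * xs ! j) = n} = (\<lambda>(x,y,z). [x,y,z]) ` R3 a b c n"
  proof (rule set_eqI, rule iffI)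
    fix xs :: "nat list" assume h: "xs \<in> {xs :: nat list. length xs = length [a,b,c] \<and>
       int (\<Sum>j<length [a,b,c]. [a,b,c] ! j * xs ! j) = n}"
    then have l: "length xs = 3" by simp
    then obtain x y z where xs: "xs = [x,y,z]"
      by (auto simp: numeral_3_eq_3 length_Suc_conv)
    have "(\<Sum>j<3. [a,b,c] ! j * xs ! j) = a*x+b*y+c*z"
      by (simp add: xs numeral_3_eq_3 lessThan_Suc)
    with h l xs show "xs \<in> (\<lambda>(x,y,z). [x,y,z]) ` R3 a b c n"
      by (auto simp: R3_def image_iff)
  next
    fix xs assume "xs \<in> (\<lambda>(x,y,z). [x,y,z]) ` R3 a b c n"
    then obtain x y z where xs: "xs = [x,y,z]" and "int (a*x+b*y+c*z) = n"
      by (auto simp: R3_def)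
    moreover have "(\<Sum>j<3. [a,b,c] ! j * xs ! j) = a*x+b*y+c*z"
      by (simp add: xs numeral_3_eq_3 lessThan_Suc)
    ultimately show "xs \<in> {xs :: nat list. length xs = length [a,b,c] \<and>
       int (\<Sum>j<length [a,b,c]. [a,b,c] ! j * xs ! j) = n}" by simp
  qed
  moreover have "inj_on (\<lambda>(x,y,z). [x,y,z]) (R3 a b c n)"
    by (auto simp: inj_on_def)
  ultimately show ?thesis unfolding num_reps_def by (simp add: card_image)
qed

lemma R3_finite: assumes "a > 0" "b > 0" "c > 0" shows "finite (R3 a b c n)"
proof -
  have "R3 a b c n \<subseteq> {..nat n} \<times> {..nat n} \<times> {..nat n}"
  proof
    fix p assume "p \<in> R3 a b c n"
    then obtain x y z where p: "p = (x,y,z)" and e: "int (a*x+b*y+c*z) = n" by (auto simp: R3_def)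
    have "x \<le> a*x" "y \<le> b*y" "z \<le> c*z" using assms by auto
    moreover have "nat n = a*x+b*y+c*z" using e by (metis nat_int)
    ultimately have "x \<le> nat n" "y \<le> nat n" "z \<le> nat n" by linarith+
    then show "p \<in> {..nat n} \<times> {..nat n} \<times> {..nat n}" using p by auto
  qed
  then show ?thesis by (rule finite_subset) auto
qed

lemma upper2:
  assumes "a > 0"
    and "\<And>x y z. int (a*x+b*y+c*z) = G \<Longrightarrow> (y,z) = P1 \<or> (y,z) = P2"
  shows "num_reps G [a,b,c] \<le> 2"
proof -
  have inj: "inj_on (\<lambda>(x,y,z). (y,z)) (R3 a b c G)"
  proof (rule inj_onI)
    fix p p' assume "p \<in> R3 a b c G" "p' \<in> R3 a b c G" and eq: "(\<lambda>(x,y,z). (y,z)) p = (\<lambda>(x,y,z). (y,z)) p'"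
    then obtain x y z x' y' z' where p: "p = (x,y,z)" "p' = (x',y',z')"
      and e: "int (a*x+b*y+c*z) = G" "int (a*x'+b*y'+c*z') = G" by (auto simp: R3_def)
    with eq have "y = y'" "z = z'" by auto
    have "a*x+b*y+c*z = a*x'+b*y'+c*z'" using e by (metis of_nat_eq_iff)
    with \<open>y = y'\<close> \<open>z = z'\<close> have "a*x = a*x'" by simp
    then have "x = x'" using assms(1) by simp
    then show "p = p'" using p \<open>y = y'\<close> \<open>z = z'\<close> by simp
  qed
  have "(\<lambda>(x,y,z). (y,z)) ` R3 a b c G \<subseteq> {P1,P2}"
  proof
    fix q assume "q \<in> (\<lambda>(x,y,z). (y,z)) ` R3 a b c G"
    then obtain x y z where "q = (y,z)" "(x,y,z) \<in> R3 a b c G" by auto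
    then have "q = (y,z)" "int (a*x+b*y+c*z) = G" unfolding R3_def by auto
    then show "q \<in> {P1,P2}" using assms(2) by blast
  qed
  then have "card ((\<lambda>(x,y,z). (y,z)) ` R3 a b c G) \<le> card {P1,P2}"
    by (rule card_mono[rotated]) simp
  also have "\<dots> \<le> 2" by (simp add: card_insert_if)
  finally show ?thesis using inj by (simp add: num_reps3 card_image)
qed

lemma pfrob_eqI:
  assumes "num_reps G as \<le> 2" "\<And>n. n > G \<Longrightarrow> num_reps n as \<ge> 3"
  shows "p_frobenius 2 as = G"
  unfolding p_frobenius_def
proof (rule Greatest_equality)
  show "num_reps G as \<le> 2" by fact
  fix y assume "num_reps y as \<le> 2"
  then show "y \<le> G" using assms(2)[of y] by (cases "y > G") auto
qed

lemma mod_shift: "(b*y + c*z) mod a = (b*(y+s*z)) mod a" if "c + t*a = s*b" for a b c s t y z :: nat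
proof -
  have "b*(y+s*z) = b*y + (s*b)*z" by (simp add: algebra_simps)
  also have "\<dots> = b*y + (c+t*a)*z" using that by simp
  also have "\<dots> = (b*y + c*z) + a*(t*z)" by (simp add: algebra_simps)
  finally show ?thesis by simp
qed

lemma residue_exists:
  fixes a b N :: nat
  assumes "a > 0" "coprime a b"
  shows "\<exists>\<rho><a. (b*\<rho>) mod a = N mod a"
proof -
  have "coprime b a" using assms(2) by (simp add: coprime_commute)
  then obtain u where u: "[b*u = Suc 0] (mod a)" using cong_solve_coprime_nat by blast
  define \<rho> where "\<rho> = (u*N) mod a"
  have "[b*\<rho> = b*(u*N)] (mod a)" unfolding \<rho>_def by (simp add: cong_def mod_mult_right_eq)
  also have "b*(u*N) = (b*u)*N" by simp
  also have "[(b*u)*N = Suc 0 * N] (mod a)" using u by (rule cong_mult) simp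
  finally have "[b*\<rho> = N] (mod a)" by simp
  then have "(b*\<rho>) mod a = N mod a" by (simp add: cong_def)
  moreover have "\<rho> < a" using assms(1) unfolding \<rho>_def by simp
  ultimately show ?thesis by blast
qed

lemma pair_rep:
  fixes a b c s t \<rho> N y z :: nat
  assumes "a > 0" "c + t*a = s*b" "(b*\<rho>) mod a = N mod a" "(y + s*z) mod a = \<rho>"
    and "b*y + c*z < N + a"
  shows "\<exists>x. a*x + b*y + c*z = N"
proof -
  have m: "(b*y + c*z) mod a = N mod a"
    using mod_shift[OF assms(2)] assms(3,4) by (metis mod_mult_right_eq)
  have le: "b*y + c*z \<le> N"
  proof (rule ccontr)
    assume "\<not> ?thesis"
    then have "N < b*y+c*z" by simp
    with m have "a dvd (b*y+c*z) - N" by (simp add: mod_eq_dvd_iff_nat)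
    moreover have "0 < (b*y+c*z) - N" "(b*y+c*z) - N < a" using \<open>N < b*y+c*z\<close> assms(5) by auto
    ultimately show False by (meson nat_dvd_not_less)
  qed
  with m have "a dvd N - (b*y+c*z)" by (metis mod_eq_dvd_iff_nat)
  then obtain x where "N - (b*y+c*z) = a*x" by blast
  with le show ?thesis by (intro exI[of _ x]) simp
qed

lemma cover3:
  assumes a: "a > 0" "b > 0" "c > 0" and cop: "coprime a b" and rel: "c + t*a = s*b" and G: "G \<ge> 0"
    and cov: "\<And>\<rho>. \<rho> < a \<Longrightarrow> \<exists>y1 z1 y2 z2 y3 z3.
        (y1,z1) \<noteq> (y2,z2) \<and> (y1,z1) \<noteq> (y3,z3) \<and> (y2,z2) \<noteq> (y3,z3) \<and>
        (y1 + s*z1) mod a = \<rho> \<and> (y2 + s*z2) mod a = \<rho> \<and> (y3 + s*z3) mod a = \<rho> \<and>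
        int (b*y1 + c*z1) \<le> G + int a \<and> int (b*y2 + c*z2) \<le> G + int a \<and> int (b*y3 + c*z3) \<le> G + int a"
    and n: "n > G"
  shows "num_reps n [a,b,c] \<ge> 3"
proof -
  define N where "N = nat n"
  have nN: "n = int N" using n G unfolding N_def by simp
  obtain \<rho> where \<rho>: "\<rho> < a" "(b*\<rho>) mod a = N mod a" using residue_exists[OF a(1) cop] by blast
  obtain y1 z1 y2 z2 y3 z3 where d: "(y1,z1) \<noteq> (y2,z2)" "(y1,z1) \<noteq> (y3,z3)" "(y2,z2) \<noteq> (y3,z3)"
    and r: "(y1 + s*z1) mod a = \<rho>" "(y2 + s*z2) mod a = \<rho>" "(y3 + s*z3) mod a = \<rho>"
    and v: "int (b*y1 + c*z1) \<le> G + int a" "int (b*y2 + c*z2) \<le> G + int a" "int (b*y3 + c*z3) \<le> G + int a"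
    using cov[OF \<rho>(1)] by blast
  have v': "b*y1 + c*z1 < N + a" "b*y2 + c*z2 < N + a" "b*y3 + c*z3 < N + a" using v n nN by linarith+
  obtain x1 where x1: "a*x1 + b*y1 + c*z1 = N" using pair_rep[OF a(1) rel \<rho>(2) r(1) v'(1)] by blast
  obtain x2 where x2: "a*x2 + b*y2 + c*z2 = N" using pair_rep[OF a(1) rel \<rho>(2) r(2) v'(2)] by blast
  obtain x3 where x3: "a*x3 + b*y3 + c*z3 = N" using pair_rep[OF a(1) rel \<rho>(2) r(3) v'(3)] by blast
  have "int (a*x1+b*y1+c*z1) = n" "int (a*x2+b*y2+c*z2) = n" "int (a*x3+b*y3+c*z3) = n"
    by (simp only: x1 x2 x3 nN)+
  then have sub: "{(x1,y1,z1),(x2,y2,z2),(x3,y3,z3)} \<subseteq> R3 a b c n"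
    unfolding R3_def by auto
  have "card {(x1,y1,z1),(x2,y2,z2),(x3,y3,z3)} = 3" using d by auto
  moreover have "card {(x1,y1,z1),(x2,y2,z2),(x3,y3,z3)} \<le> card (R3 a b c n)"
    by (rule card_mono[OF R3_finite[OF a] sub])
  ultimately show ?thesis by (simp add: num_reps3)
qed

lemma class_of:
  fixes a b c s t \<rho>0 N x y z :: nat
  assumes a: "a > 0" and cop: "coprime a b" and rel: "c + t*a = s*b"
    and \<rho>: "\<rho>0 < a" "(b*\<rho>0) mod a = N mod a" and e: "a*x + b*y + c*z = N"
  shows "\<exists>j. y + s*z = \<rho>0 + a*j"
proof -
  have "(b*(y+s*z)) mod a = (b*y+c*z) mod a" using mod_shift[OF rel] by simp
  also have "\<dots> = N mod a" using e by (metis add.assoc mod_mult_self4)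
  finally have "[b*(y+s*z) = b*\<rho>0] (mod a)" using \<rho>(2) by (simp add: cong_def)
  moreover have "coprime b a" using cop by (simp add: coprime_commute)
  ultimately have "[y+s*z = \<rho>0] (mod a)" by (simp add: cong_mult_lcancel_nat)
  then have "(y+s*z) mod a = \<rho>0" using \<rho>(1) by (simp add: cong_def)
  then show ?thesis by (metis mod_mult_div_eq add.commute)
qed

lemma sV: "s*(b*y + c*z) = (y + s*z)*c + y*t*a" if "c + t*a = s*b" for a b c s t y z :: nat
proof -
  have "s*(b*y) = y*(s*b)" by simp
  also have "\<dots> = y*(c + t*a)" using that by simp
  finally show ?thesis by (simp add: algebra_simps)
qed

lemma residue_of:
  fixes a b C t z \<rho>0 j :: nat
  assumes "C + t*a*z = b*(\<rho>0 + a*j)" "C \<ge> a"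
  shows "(b*\<rho>0) mod a = (C - a) mod a"
proof -
  have "b*(\<rho>0 + a*j) = b*\<rho>0 + a*(b*j)" by (simp add: algebra_simps)
  then have "(b*\<rho>0) mod a = (b*(\<rho>0 + a*j)) mod a" by simp
  also have "\<dots> = (C + t*a*z) mod a" using assms(1) by simp
  also have "\<dots> = C mod a" by (metis mod_mult_self2 mult.commute mult.left_commute)
  also have "\<dots> = (C - a) mod a" using assms(2) by (metis le_add_diff_inverse2 mod_add_self2)
  finally show ?thesis .
qed


lemma contra_mid:
  fixes a b c s t x y z G M C Z :: nat
  assumes "a*x + b*y + c*z = G" "c + t*a = s*b" "y + s*z = M" "b*M = C + t*a*Z" "z \<le> Z" "G < C"
  shows False
proof -
  have "b*(y+s*z) = b*y + (s*b)*z" by (simp add: algebra_simps)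
  also have "\<dots> = b*y + (c + t*a)*z" using assms(2) by simp
  finally have "b*y + c*z + t*a*z = b*(y+s*z)" by (simp add: algebra_simps)
  then have "b*y + c*z + t*a*z = C + t*a*Z" using assms(3,4) by simp
  moreover have "t*a*z \<le> t*a*Z" using assms(5) by simp
  ultimately have "C \<le> b*y+c*z" by linarith
  then show False using assms(1,6) by linarith
qed

lemma contra_big:
  fixes a b c s t x y z G M :: nat
  assumes "a*x + b*y + c*z = G" "c + t*a = s*b" "y + s*z \<ge> M" "s*G < M*c"
  shows False
proof -
  have "s*(b*y + c*z) = (y + s*z)*c + y*t*a" using sV[OF assms(2)] .
  moreover have "M*c \<le> (y+s*z)*c" using assms(3) by simp
  moreover have "s*(b*y+c*z) \<le> s*G" using assms(1) by simp
  ultimately show False using assms(4) by linarith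
qed

lemma zbound:
  fixes s y z M Z :: nat
  assumes "y + s*z = M" "M < (Z+1)*s"
  shows "z \<le> Z"
proof -
  have "s*z < s*(Z+1)" using assms by (simp add: algebra_simps)
  then have "z < Z+1" using mult_less_cancel1 by blast
  then show ?thesis by simp
qed

lemma modeq: "y + s*z = \<rho> + a*j \<Longrightarrow> \<rho> < a \<Longrightarrow> (j::nat) \<le> 1 \<Longrightarrow> (y + s*z) mod a = \<rho>"
  for y s z \<rho> a :: nat by auto

lemma finish:
  fixes a b c s t C \<rho>0 :: nat
  assumes pos: "a > 0" "b > 0" "c > 0" and cop: "coprime a b" and rel: "c + t*a = s*b"
    and Ca: "C \<ge> a" and \<rho>0: "\<rho>0 < a" and res: "(b*\<rho>0) mod a = (C - a) mod a"
    and cov: "\<And>\<rho>. \<rho> < a \<Longrightarrow> \<exists>y1 z1 y2 z2 y3 z3.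
        (y1,z1) \<noteq> (y2,z2) \<and> (y1,z1) \<noteq> (y3,z3) \<and> (y2,z2) \<noteq> (y3,z3) \<and>
        (y1 + s*z1) mod a = \<rho> \<and> (y2 + s*z2) mod a = \<rho> \<and> (y3 + s*z3) mod a = \<rho> \<and>
        b*y1 + c*z1 \<le> C \<and> b*y2 + c*z2 \<le> C \<and> b*y3 + c*z3 \<le> C"
    and A: "\<And>x y z j. a*x + b*y + c*z = C - a \<Longrightarrow> y + s*z = \<rho>0 + a*j \<Longrightarrow> (y,z) = P1 \<or> (y,z) = P2"
  shows "p_frobenius 2 [a,b,c] = int C - int a"
proof -
  have G: "int C - int a = int (C - a)" using Ca by simp
  show ?thesis unfolding G
  proof (rule pfrob_eqI)
    show "num_reps (int (C - a)) [a,b,c] \<le> 2"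
    proof (rule upper2[OF pos(1)])
      fix x y z assume "int (a*x+b*y+c*z) = int (C - a)"
      then have e: "a*x+b*y+c*z = C - a" by (simp only: of_nat_eq_iff)
      obtain j where "y + s*z = \<rho>0 + a*j" using class_of[OF pos(1) cop rel \<rho>0 res e] by blast
      then show "(y,z) = P1 \<or> (y,z) = P2" using A[OF e] by blast
    qed
  next
    fix n assume n: "n > int (C - a)"
    show "num_reps n [a,b,c] \<ge> 3"
    proof (rule cover3[OF pos cop rel _ _ n])
      show "0 \<le> int (C - a)" by simp
      fix \<rho> assume "\<rho> < a"
      from cov[OF this] obtain y1 z1 y2 z2 y3 z3 where h:
        "(y1,z1) \<noteq> (y2,z2)" "(y1,z1) \<noteq> (y3,z3)" "(y2,z2) \<noteq> (y3,z3)"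
        "(y1 + s*z1) mod a = \<rho>" "(y2 + s*z2) mod a = \<rho>" "(y3 + s*z3) mod a = \<rho>"
        "b*y1 + c*z1 \<le> C" "b*y2 + c*z2 \<le> C" "b*y3 + c*z3 \<le> C" by blast
      have CC: "int (C - a) + int a = int C" using Ca by simp
      have "int (b*y1 + c*z1) \<le> int (C - a) + int a" "int (b*y2 + c*z2) \<le> int (C - a) + int a"
        "int (b*y3 + c*z3) \<le> int (C - a) + int a" unfolding CC using h(7-9) by (simp_all only: of_nat_le_iff)
      then show "\<exists>y1 z1 y2 z2 y3 z3.
        (y1,z1) \<noteq> (y2,z2) \<and> (y1,z1) \<noteq> (y3,z3) \<and> (y2,z2) \<noteq> (y3,z3) \<and>
        (y1 + s*z1) mod a = \<rho> \<and> (y2 + s*z2) mod a = \<rho> \<and> (y3 + s*z3) mod a = \<rho> \<and>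
        int (b*y1 + c*z1) \<le> int (C - a) + int a \<and> int (b*y2 + c*z2) \<le> int (C - a) + int a \<and>
        int (b*y3 + c*z3) \<le> int (C - a) + int a"
        using h(1-6) by blast
    qed
  qed
qed


lemma mlI: "(x::int) \<le> y \<Longrightarrow> 0 \<le> k \<Longrightarrow> k*x \<le> k*y" by (rule mult_left_mono)

lemma three:
  fixes a b c s \<rho> M y1 z1 y2 z2 y3 z3 j1 j2 j3 :: nat
  assumes "(y1,z1) \<noteq> (y2,z2)" "(y1,z1) \<noteq> (y3,z3)" "(y2,z2) \<noteq> (y3,z3)"
    "y1 + s*z1 = \<rho> + a*j1" "y2 + s*z2 = \<rho> + a*j2" "y3 + s*z3 = \<rho> + a*j3" "\<rho> < a"
    "b*y1 + c*z1 \<le> M" "b*y2 + c*z2 \<le> M" "b*y3 + c*z3 \<le> M"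
  shows "\<exists>y1 z1 y2 z2 y3 z3.
        (y1,z1) \<noteq> (y2,z2) \<and> (y1,z1) \<noteq> (y3,z3) \<and> (y2,z2) \<noteq> (y3,z3) \<and>
        (y1 + s*z1) mod a = \<rho> \<and> (y2 + s*z2) mod a = \<rho> \<and> (y3 + s*z3) mod a = \<rho> \<and>
        b*y1 + c*z1 \<le> M \<and> b*y2 + c*z2 \<le> M \<and> b*y3 + c*z3 \<le> M"
proof -
  have "(y1 + s*z1) mod a = \<rho>" "(y2 + s*z2) mod a = \<rho>" "(y3 + s*z3) mod a = \<rho>"
    using assms(4-7) by simp_all
  then show ?thesis using assms by blast
qed

lemma coverF:
  fixes a b c s t r q M \<rho> :: nat
  assumes a: "a = r*s + q" and q: "1 \<le> q" "q \<le> s" and r: "r \<ge> 2" and rel: "c + t*a = s*b"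
    and sb: "2*(t*a) \<le> s*b"
    and M1: "int (q-1)*b + (r+2)*c \<le> M" and M2: "int (s-1)*b + (r+1)*c \<le> M" and \<rho>: "\<rho> < a"
  shows "\<exists>y1 z1 y2 z2 y3 z3.
        (y1,z1) \<noteq> (y2,z2) \<and> (y1,z1) \<noteq> (y3,z3) \<and> (y2,z2) \<noteq> (y3,z3) \<and>
        (y1 + s*z1) mod a = \<rho> \<and> (y2 + s*z2) mod a = \<rho> \<and> (y3 + s*z3) mod a = \<rho> \<and>
        b*y1 + c*z1 \<le> M \<and> b*y2 + c*z2 \<le> M \<and> b*y3 + c*z3 \<le> M"
proof -
  have s0: "s > 0" using q by linarith
  have r0: "int c + int t * int a = int s * int b" using arg_cong[OF rel, of int] by simp
  have cI: "int c = int s * int b - int t * int a" using r0 by linarith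
  have "int (2*(t*a)) \<le> int (s*b)" using sb by (simp only: of_nat_le_iff)
  then have sbI: "2 * (int t * int a) \<le> int s * int b" by simp
  have I1: "int s * int b \<le> 2 * int c" using sbI cI by linarith
  have I2: "int c \<le> int s * int b" using cI by simp
  have cle: "c \<le> s*b" using rel by linarith
  have M1I: "(int q - 1) * int b + (int r + 2) * int c \<le> int M" using M1 q by (simp add: of_nat_diff algebra_simps)
  have M2I: "(int s - 1) * int b + (int r + 1) * int c \<le> int M" using M2 q by (simp add: of_nat_diff algebra_simps)
  have aI: "int a = int r * int s + int q" using a by simp
  define z0 where "z0 = \<rho> div s"
  define y0 where "y0 = \<rho> mod s"
  have \<rho>d: "\<rho> = z0*s + y0" unfolding z0_def y0_def by simp
  have y0s: "y0 < s" unfolding y0_def using s0 by simp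
  have z0r: "z0 \<le> r"
  proof -
    have "z0*s < (r+1)*s" using \<rho>d \<rho> a q by (simp add: algebra_simps)
    then have "z0 < r+1" using mult_less_cancel2 by blast
    then show ?thesis by simp
  qed
  have b0: "0 \<le> int b" "0 \<le> int c" by simp_all
  show ?thesis
  proof (cases "z0 \<ge> 2")
    case True
    then obtain z' where z': "z0 = z' + 2" by (metis add.commute le_Suc_ex)
    have v3: "b*(y0+2*s) + c*z' \<le> M"
    proof (cases "z' + 3 \<le> r")
      case True
      have f1: "int b * int y0 \<le> int b * (int s - 1)" using y0s by (intro mlI) simp_all
      have f2: "int c * int z' \<le> int c * (int r - 3)" using True by (intro mlI) simp_all
      have "int (b*(y0+2*s) + c*z') \<le> int M" using f1 f2 I1 M2I by (simp add: algebra_simps)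
      then show ?thesis by (simp only: of_nat_le_iff)
    next
      case False
      then have zr: "z' + 2 = r" using z0r z' by simp
      then have "y0 < q" using \<rho>d \<rho> a z' by simp
      then have f1: "int b * int y0 \<le> int b * (int q - 1)" by (intro mlI) simp_all
      have "int (b*(y0+2*s) + c*z') \<le> int M" using f1 I1 M1I zr[symmetric] by (simp add: algebra_simps)
      then show ?thesis by (simp only: of_nat_le_iff)
    qed
    have v2: "b*(y0+s) + c*(z'+1) \<le> b*(y0+2*s) + c*z'"
      using cle by (simp add: algebra_simps)
    have v1: "b*y0 + c*(z'+2) \<le> b*(y0+s) + c*(z'+1)"
      using cle by (simp add: algebra_simps)
    show ?thesis
      by (rule three[of y0 "z'+2" "y0+s" "z'+1" "y0+2*s" z' s \<rho> a 0 0 0])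
         (use v1 v2 v3 \<rho>d z' \<rho> in \<open>simp_all add: algebra_simps\<close>)
  next
    case False
    then consider "z0 = 0" | "z0 = 1" by linarith
    then show ?thesis
    proof cases
      case 1
      then have \<rho>y: "\<rho> = y0" using \<rho>d by simp
      obtain r' where r': "r = r' + 1" using r by (metis add.commute le_Suc_ex one_le_numeral order_trans)
      have rI: "int r = int r' + 1" using r' by simp
      have cpos: "0 \<le> (int r + 1) * int c" by simp
      have v1: "b*y0 \<le> M"
      proof -
        have f1: "int b * int y0 \<le> int b * (int s - 1)" using y0s by (intro mlI) simp_all
        have h: "(int s - 1)*int b \<le> int M" using M2I cpos by linarith
        have "int b * int y0 \<le> int M" using f1 h by (simp add: mult.commute)
        then show ?thesis by (metis of_nat_le_iff of_nat_mult)
      qed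
      show ?thesis
      proof (cases "y0 + q < s")
        case True
        have v3: "b*(y0+q+s) + c*r' \<le> M"
        proof -
          have f1: "int b * (int y0 + int q) \<le> int b * (int s - 1)" using True by (intro mlI) simp_all
          have "int (b*(y0+q+s) + c*r') \<le> int M" using f1 M2I I1 rI by (simp add: algebra_simps)
          then show ?thesis by (simp only: of_nat_le_iff)
        qed
        have v2: "b*(y0+q) + c*r \<le> b*(y0+q+s) + c*r'"
          using cle r' by (simp add: algebra_simps)
        have e3: "y0+q+s + s*r' = \<rho> + a*1" using \<rho>y a r' by (simp add: algebra_simps)
        have e2: "y0+q + s*r = \<rho> + a*1" using \<rho>y a by (simp add: algebra_simps)
        show ?thesis
          by (rule three[of y0 0 "y0+q" r "y0+q+s" r' s \<rho> a 0 1 1])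
             (use v1 v2 v3 \<rho>y \<rho> r' e2 e3 q in \<open>simp_all\<close>)
      next
        case False
        have v3: "b*(y0+q) + c*r \<le> M"
        proof -
          have f1: "int b * (int y0 + int q) \<le> int b * (int s - 1 + int q)" using y0s by (intro mlI) simp_all
          have "int (b*(y0+q) + c*r) \<le> int M" using f1 M1I I1 by (simp add: algebra_simps)
          then show ?thesis by (simp only: of_nat_le_iff)
        qed
        have v2: "b*(y0+q-s) + c*(r+1) \<le> b*(y0+q) + c*r"
        proof -
          have "b*(y0+q-s) + b*s = b*(y0+q)" using False by (metis add_mult_distrib2 le_add_diff_inverse2 not_less)
          then show ?thesis using cle by (simp add: algebra_simps)
        qed
        have e3: "y0+q + s*r = \<rho> + a*1" using \<rho>y a by (simp add: algebra_simps)
        have e2: "y0+q-s + s*(r+1) = \<rho> + a*1" using \<rho>y a False by (simp add: algebra_simps)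
        show ?thesis
          by (rule three[of y0 0 "y0+q-s" "r+1" "y0+q" r s \<rho> a 0 1 1])
             (use v1 v2 v3 \<rho>y \<rho> r e2 e3 q in \<open>simp_all\<close>)
      qed
    next
      case 2
      then have \<rho>y: "\<rho> = s + y0" using \<rho>d by simp
      have v1: "b*y0 + c \<le> M"
      proof -
        have f1: "int b * int y0 \<le> int b * (int s - 1)" using y0s by (intro mlI) simp_all
        have "int (b*y0 + c) \<le> int M" using f1 M2I I1 b0 r by (simp add: algebra_simps) (smt (verit) mult_nonneg_nonneg of_nat_0_le_iff)
        then show ?thesis by (simp only: of_nat_le_iff)
      qed
      have v2: "b*(y0+s) \<le> M"
      proof -
        have f1: "int b * int y0 \<le> int b * (int s - 1)" using y0s by (intro mlI) simp_all
        have f2: "2 * int c \<le> (int r + 1) * int c" using r by (intro mult_right_mono) simp_all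
        have "int (b*(y0+s)) \<le> int M" using f1 f2 M2I I1 by (simp add: algebra_simps)
        then show ?thesis by (simp only: of_nat_le_iff)
      qed
      show ?thesis
      proof (cases "y0 + q < s")
        case True
        have v3: "b*(y0+q) + c*(r+1) \<le> M"
        proof -
          have f1: "int b * (int y0 + int q) \<le> int b * (int s - 1)" using True by (intro mlI) simp_all
          have "int (b*(y0+q) + c*(r+1)) \<le> int M" using f1 M2I by (simp add: algebra_simps)
          then show ?thesis by (simp only: of_nat_le_iff)
        qed
        show ?thesis
          by (rule three[of y0 1 "y0+s" 0 "y0+q" "r+1" s \<rho> a 0 0 1])
             (use v1 v2 v3 \<rho>y \<rho> a r in \<open>simp_all add: algebra_simps\<close>)
      next
        case False
        have v3: "b*(y0+q-s) + c*(r+2) \<le> M"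
        proof -
          have f1: "int b * (int y0 + int q - int s) \<le> int b * (int q - 1)" using y0s by (intro mlI) simp_all
          have d: "int (y0+q-s) = int y0 + int q - int s" using False by (simp add: of_nat_diff)
          have "int (b*(y0+q-s) + c*(r+2)) = int b * (int y0 + int q - int s) + int c * (int r + 2)"
            by (simp only: of_nat_add of_nat_mult d) simp
          also have "\<dots> \<le> int M" using f1 M1I by (simp add: algebra_simps)
          finally have "int (b*(y0+q-s) + c*(r+2)) \<le> int M" .
          then show ?thesis by (simp only: of_nat_le_iff)
        qed
        show ?thesis
          by (rule three[of y0 1 "y0+s" 0 "y0+q-s" "r+2" s \<rho> a 0 0 1])
             (use v1 v2 v3 \<rho>y \<rho> a r False in \<open>simp_all add: algebra_simps\<close>)
      qed
    qed
  qed
qed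

lemma lin1: "0 \<le> (P::int) \<Longrightarrow> 0 \<le> Q \<Longrightarrow> 1 \<le> S \<Longrightarrow> 1 \<le> T \<Longrightarrow> 0 < P + S + T + 2*Q" by linarith
lemma lin2: "(X::int) \<le> Y \<Longrightarrow> U \<le> W \<Longrightarrow> X - W = S + T \<Longrightarrow> 1 \<le> S \<Longrightarrow> 1 \<le> T \<Longrightarrow> 0 < Y + - U" by linarith

lemma caseF:
  fixes a b c s t r q :: nat
  assumes a: "a = r*s + q" and q: "1 \<le> q" "q \<le> s" and r: "r \<ge> 2" and rel: "c + t*a = s*b"
    and cop: "coprime a b" and bt: "(r+3)*t \<le> b" and sb: "2*(t*a) \<le> s*b" and t: "t \<ge> 1"
  shows "t*a \<le> q*b \<Longrightarrow> p_frobenius 2 [a,b,c] = int ((q-1)*b + (r+2)*c) - int a"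
    and "q*b < t*a \<Longrightarrow> p_frobenius 2 [a,b,c] = int ((s-1)*b + (r+1)*c) - int a"
proof -
  have s0: "s \<ge> 1" using q by linarith
  have a0: "a > 0" using a q by simp
  have a2: "a \<ge> 2*s + 1"
  proof -
    have "2*s \<le> r*s" using r by simp
    then show ?thesis using a q by linarith
  qed
  have "t \<le> (r+3)*t" by simp
  then have b0: "b > 0" using bt t by linarith
  have s1: "int s \<ge> 1" using s0 by simp
  have t1: "int t \<ge> 1" using t by simp
  have r0: "int c + int t * int a = int s * int b" using arg_cong[OF rel, of int] by simp
  have cI: "int c = int s * int b - int t * int a" using r0 by linarith
  have "int (2*(t*a)) \<le> int (s*b)" using sb by (simp only: of_nat_le_iff)
  then have sbI: "2 * (int t * int a) \<le> int s * int b" by simp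
  have aI: "int a = int r * int s + int q" using a by simp
  have "0 < t*a" using t a0 by simp
  then have ta0: "int t * int a \<ge> 1" by (metis of_nat_0_less_iff of_nat_mult int_one_le_iff_zero_less)
  have c0: "c > 0" using cI sbI ta0 by linarith
  have "int ((r+3)*t) \<le> int b" using bt by (simp only: of_nat_le_iff)
  then have btI: "(int r + 3) * int t \<le> int b" by simp
  define C1 where "C1 = (q-1)*b + (r+2)*c"
  define C2 where "C2 = (s-1)*b + (r+1)*c"
  have C1I: "int C1 = (int q - 1)*int b + (int r + 2) * int c" unfolding C1_def of_nat_add of_nat_mult of_nat_diff[OF q(1)] by simp
  have C2I: "int C2 = (int s - 1)*int b + (int r + 1) * int c" unfolding C2_def of_nat_add of_nat_mult of_nat_diff[OF s0] by simp
  have cge: "int c \<ge> int t * int a" using cI sbI by linarith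
  have "1 * int a \<le> int t * int a" by (rule mult_right_mono) (use t in auto)
  then have cgea: "int c \<ge> int a" using cge by linarith
  {
    assume case1: "t*a \<le> q*b"
    have "int (t*a) \<le> int (q*b)" using case1 by (simp only: of_nat_le_iff)
    then have case1I: "int t * int a \<le> int q * int b" by simp
    have C21: "C2 \<le> C1"
    proof -
      have "int C2 \<le> int C1" unfolding C1I C2I using case1I cI by (simp add: algebra_simps)
      then show ?thesis by simp
    qed
    have Ca: "C1 \<ge> a"
    proof -
      have k1: "0 \<le> (int q - 1)*int b" using q by simp
      have "1 * int c \<le> (int r + 2) * int c" by (rule mult_right_mono) simp_all
      then have "int a \<le> int C1" unfolding C1I using cgea k1 by linarith
      then show ?thesis by simp
    qed
    have \<rho>0: "2*s - 1 < a" using a2 by linarith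
    have iden: "b*(2*s - 1 + a*1) = C1 + t*a*(r+2)"
    proof -
      have "int (b*(2*s - 1 + a*1)) = int (C1 + t*a*(r+2))"
        using s0 unfolding of_nat_add of_nat_mult C1I by (simp add: of_nat_diff cI aI algebra_simps)
      then show ?thesis by (simp only: of_nat_eq_iff)
    qed
    have res: "(b*(2*s-1)) mod a = (C1 - a) mod a" using residue_of[OF _ Ca, of t "r+2" b "2*s-1" 1] iden by simp
    show "p_frobenius 2 [a,b,c] = int ((q-1)*b + (r+2)*c) - int a"
      unfolding C1_def[symmetric]
    proof (rule finish[OF a0 b0 c0 cop rel Ca \<rho>0 res])
      fix \<rho> assume \<rho>a: "\<rho> < a"
      show "\<exists>y1 z1 y2 z2 y3 z3.
        (y1,z1) \<noteq> (y2,z2) \<and> (y1,z1) \<noteq> (y3,z3) \<and> (y2,z2) \<noteq> (y3,z3) \<and>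
        (y1 + s*z1) mod a = \<rho> \<and> (y2 + s*z2) mod a = \<rho> \<and> (y3 + s*z3) mod a = \<rho> \<and>
        b*y1 + c*z1 \<le> C1 \<and> b*y2 + c*z2 \<le> C1 \<and> b*y3 + c*z3 \<le> C1"
        proof -
        have M1': "int (q-1)*int b + int ((r+2)*c) \<le> int C1" unfolding C1_def by simp
        have M2': "int (s-1)*int b + int ((r+1)*c) \<le> int C1" using C21 unfolding C2_def by (metis of_nat_add of_nat_le_iff of_nat_mult)
        show ?thesis by (rule coverF[OF a q r rel sb M1' M2' \<rho>a])
      qed
    next
      fix x y z j assume e: "a*x + b*y + c*z = C1 - a" and m: "y + s*z = (2*s-1) + a*j"
      consider "j = 0" | "j = 1" | "j \<ge> 2" by linarith
      then show "(y,z) = (2*s-1, 0) \<or> (y,z) = (s-1, 1)"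
      proof cases
        case 1
        have "z \<le> 1" using zbound[of y s z "2*s-1" 1] m 1 s0 by simp
        then consider "z = 0" | "z = 1" by linarith
        then show ?thesis using m 1 by cases auto
      next
        case 2
        have "z \<le> r+2"
        proof (rule zbound[of y s z "2*s-1+a*1"])
          show "y + s*z = 2*s-1+a*1" using m 2 by simp
          show "2*s-1+a*1 < (r+2+1)*s" using a q s0 by (simp add: algebra_simps)
        qed
        moreover have "C1 - a < C1" using a0 Ca by linarith
        ultimately show ?thesis using contra_mid[OF e rel _ iden] m 2 by blast
      next
        case 3
        have ge: "y + s*z \<ge> 2*s - 1 + a*2" using m 3 by simp
        have "s*(C1 - a) < (2*s - 1 + a*2)*c"
        proof -
          have k1: "int t * int q \<le> int t * int s" using q by (intro mlI) simp_all
          have k2: "0 \<le> int s * (int b - int t * int r - 2 * int t)" using btI by (intro mult_nonneg_nonneg) (simp_all add: algebra_simps)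
          have id: "int s * (int b - int t * int r + 1) + int t - 2 * int t * int q =
             int s * (int b - int t * int r - 2 * int t) + int s + int t + 2*(int t * int s - int t * int q)"
            by (simp add: algebra_simps)
          have br: "0 < int s * (int b - int t * int r + 1) + int t - 2 * int t * int q"
            unfolding id by (rule lin1[OF k2 _ s1 t1]) (use k1 in simp)
          have "0 < int a * (int s * (int b - int t * int r + 1) + int t - 2 * int t * int q)"
            using br a0 by simp
          also have "\<dots> = int ((2*s - 1 + a*2)*c) - int (s*(C1 - a))"
            using s0 Ca unfolding of_nat_mult of_nat_diff[OF Ca] C1I
            by (simp add: of_nat_diff cI aI algebra_simps)
          finally have "int (s*(C1 - a)) < int ((2*s - 1 + a*2)*c)" by linarith
          then show ?thesis by (simp only: of_nat_less_iff)
        qed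
        then show ?thesis using contra_big[OF e rel ge] by blast
      qed
    qed
  }
  {
    assume case2: "q*b < t*a"
    have "int (q*b) < int (t*a)" using case2 by (simp only: of_nat_less_iff)
    then have case2I: "int q * int b < int t * int a" by simp
    have qs: "q < s"
    proof (rule ccontr)
      assume "\<not> q < s"
      then have "q = s" using q by simp
      then show False using case2I sbI ta0 by simp
    qed
    have C12: "C1 \<le> C2"
    proof -
      have "int C1 \<le> int C2" unfolding C1I C2I using case2I cI by (simp add: algebra_simps)
      then show ?thesis by simp
    qed
    have Ca: "C2 \<ge> a"
    proof -
      have k1: "0 \<le> (int s - 1)*int b" using s0 by simp
      have "1 * int c \<le> (int r + 1) * int c" by (rule mult_right_mono) simp_all
      then have "int a \<le> int C2" unfolding C2I using cgea k1 by linarith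
      then show ?thesis by simp
    qed
    have \<rho>0: "2*s - q - 1 < a" using a2 by linarith
    have iden: "b*(2*s - q - 1 + a*1) = C2 + t*a*(r+1)"
    proof -
      have "int (b*(2*s - q - 1 + a*1)) = int (C2 + t*a*(r+1))"
        using s0 qs unfolding of_nat_add of_nat_mult C2I by (simp add: of_nat_diff cI aI algebra_simps)
      then show ?thesis by (simp only: of_nat_eq_iff)
    qed
    have res: "(b*(2*s-q-1)) mod a = (C2 - a) mod a" using residue_of[OF _ Ca, of t "r+1" b "2*s-q-1" 1] iden by simp
    show "p_frobenius 2 [a,b,c] = int ((s-1)*b + (r+1)*c) - int a"
      unfolding C2_def[symmetric]
    proof (rule finish[OF a0 b0 c0 cop rel Ca \<rho>0 res])
      fix \<rho> assume \<rho>a: "\<rho> < a"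
      show "\<exists>y1 z1 y2 z2 y3 z3.
        (y1,z1) \<noteq> (y2,z2) \<and> (y1,z1) \<noteq> (y3,z3) \<and> (y2,z2) \<noteq> (y3,z3) \<and>
        (y1 + s*z1) mod a = \<rho> \<and> (y2 + s*z2) mod a = \<rho> \<and> (y3 + s*z3) mod a = \<rho> \<and>
        b*y1 + c*z1 \<le> C2 \<and> b*y2 + c*z2 \<le> C2 \<and> b*y3 + c*z3 \<le> C2"
        proof -
        have M1': "int (q-1)*int b + int ((r+2)*c) \<le> int C2" using C12 unfolding C1_def by (metis of_nat_add of_nat_le_iff of_nat_mult)
        have M2': "int (s-1)*int b + int ((r+1)*c) \<le> int C2" unfolding C2_def by simp
        show ?thesis by (rule coverF[OF a q r rel sb M1' M2' \<rho>a])
      qed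
    next
      fix x y z j assume e: "a*x + b*y + c*z = C2 - a" and m: "y + s*z = (2*s-q-1) + a*j"
      consider "j = 0" | "j = 1" | "j \<ge> 2" by linarith
      then show "(y,z) = (2*s-q-1, 0) \<or> (y,z) = (s-q-1, 1)"
      proof cases
        case 1
        have "z \<le> 1" using zbound[of y s z "2*s-q-1" 1] m 1 s0 by simp
        then consider "z = 0" | "z = 1" by linarith
        then show ?thesis using m 1 qs by cases auto
      next
        case 2
        have "z \<le> r+1"
        proof (rule zbound[of y s z "2*s-q-1+a*1"])
          show "y + s*z = 2*s-q-1+a*1" using m 2 by simp
          show "2*s-q-1+a*1 < (r+1+1)*s" using a q s0 qs by (simp add: algebra_simps)
        qed
        moreover have "C2 - a < C2" using a0 Ca by linarith
        ultimately show ?thesis using contra_mid[OF e rel _ iden] m 2 by blast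
      next
        case 3
        have ge: "y + s*z \<ge> 2*s - q - 1 + a*2" using m 3 by simp
        have "s*(C2 - a) < (2*s - q - 1 + a*2)*c"
        proof -
          have k1: "int t * (int q - 1) \<le> int t * (int s - 1)" using qs by (intro mlI) simp_all
          have k2: "int s * (int t + 1) \<le> int s * (int b - (int r + 1) * int t + 1)" using btI by (intro mlI) (simp_all add: algebra_simps)
          have id1: "int t * (1 - int q) = - (int t * (int q - 1))" by (simp add: algebra_simps)
          have id2: "int s * (int t + 1) - int t * (int s - 1) = int s + int t" by (simp add: algebra_simps)
          have br: "0 < int s * (int b - (int r + 1) * int t + 1) + int t * (1 - int q)"
            unfolding id1 by (rule lin2[OF k2 k1 id2 s1 t1])
          have "0 < int a * (int s * (int b - (int r + 1) * int t + 1) + int t * (1 - int q))"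
            using br a0 by simp
          also have "\<dots> = int ((2*s - q - 1 + a*2)*c) - int (s*(C2 - a))"
            using s0 Ca qs unfolding of_nat_mult of_nat_diff[OF Ca] C2I
            by (simp add: of_nat_diff cI aI algebra_simps)
          finally have "int (s*(C2 - a)) < int ((2*s - q - 1 + a*2)*c)" by linarith
          then show ?thesis by (simp only: of_nat_less_iff)
        qed
        then show ?thesis using contra_big[OF e rel ge] by blast
      qed
    qed
  }
qed


lemma relI: "c + t*a = s*b \<Longrightarrow> int c = int s * int b - int t * int a" for a b c s t :: nat
proof -
  assume "c + t*a = s*b"
  then have "int (c + t*a) = int (s*b)" by simp
  then show ?thesis by simp
qed

lemma byc: "c + t*a = s*b \<Longrightarrow> b*y + c*z + t*a*z = b*(y + s*z)" for a b c s t y z :: nat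
proof -
  assume h: "c + t*a = s*b"
  have "b*(y+s*z) = b*y + (s*b)*z" by (simp add: algebra_simps)
  also have "\<dots> = b*y + (c + t*a)*z" using h by simp
  finally show ?thesis by (simp add: algebra_simps)
qed

lemma caseA:
  fixes a b c s t :: nat
  assumes a0: "a \<ge> 1" and ba: "2*a \<le> b" and rel: "c + t*a = s*b" and cop: "coprime a b"
    and sa: "3*a \<le> s" and c2: "3*(a*b) \<le> 2*c" and alt: "t \<le> b \<or> 3*(a*b) \<le> c"
  shows "p_frobenius 2 [a,b,c] = int ((3*a-1)*b) - int a"
proof -
  define C where "C = (3*a-1)*b"
  have b0: "b > 0" using ba a0 by linarith
  have "a*b > 0" using a0 b0 by simp
  then have c0: "c > 0" using c2 by linarith
  have CI: "int C = 3 * int a * int b - int b" unfolding C_def using a0 by (simp add: of_nat_diff algebra_simps)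
  have Ca: "C \<ge> a"
  proof -
    have "int a * int b \<ge> int b" using a0 b0 by simp
    then have "int C \<ge> int a" unfolding CI using ba by linarith
    then show ?thesis by simp
  qed
  have GI: "int (C - a) = 3 * int a * int b - int b - int a" using Ca CI by (simp add: of_nat_diff)
  have \<rho>0: "a - 1 < a" using a0 by simp
  have iden: "b*(a - 1 + a*2) = C + t*a*0" unfolding C_def using a0 by (simp add: algebra_simps)
  have res: "(b*(a-1)) mod a = (C - a) mod a" using residue_of[OF iden[symmetric] Ca] by simp
  show ?thesis unfolding C_def[symmetric]
  proof (rule finish[OF _ b0 c0 cop rel Ca \<rho>0 res])
    show "a > 0" using a0 by simp
  next
    fix \<rho> assume \<rho>a: "\<rho> < a"
    have v: "b*(\<rho>+2*a) \<le> C"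
    proof -
      have "b*(\<rho>+2*a) \<le> b*(3*a-1)" using \<rho>a by (intro mult_le_mono2) linarith
      then show ?thesis unfolding C_def by (simp add: mult.commute)
    qed
    have v1: "b*\<rho> + c*0 \<le> C" "b*(\<rho>+a) + c*0 \<le> C" "b*(\<rho>+2*a) + c*0 \<le> C"
      using v by (simp_all add: algebra_simps)
    show "\<exists>y1 z1 y2 z2 y3 z3.
        (y1,z1) \<noteq> (y2,z2) \<and> (y1,z1) \<noteq> (y3,z3) \<and> (y2,z2) \<noteq> (y3,z3) \<and>
        (y1 + s*z1) mod a = \<rho> \<and> (y2 + s*z2) mod a = \<rho> \<and> (y3 + s*z3) mod a = \<rho> \<and>
        b*y1 + c*z1 \<le> C \<and> b*y2 + c*z2 \<le> C \<and> b*y3 + c*z3 \<le> C"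
      by (rule three[of \<rho> 0 "\<rho>+a" 0 "\<rho>+2*a" 0 s \<rho> a 0 1 2]) (use v1 \<rho>a a0 in simp_all)
  next
    fix x y z j assume e: "a*x + b*y + c*z = C - a" and m: "y + s*z = (a-1) + a*j"
    have eI: "int a * int x + int b * int y + int c * int z = 3 * int a * int b - int b - int a"
      using arg_cong[OF e, of int] GI by simp
    have bz: "b*y + c*z + t*a*z = b*(y+s*z)" by (rule byc[OF rel])
    then have bzI: "int b * int y + int c * int z + int t * int a * int z = int b * int (y + s*z)"
      by (metis of_nat_add of_nat_mult)
    have nn: "0 \<le> int a * int x" "0 \<le> int b * int y" "1 \<le> int a" "0 \<le> int c * int z" using a0 by simp_all
    consider "z = 0" | "z = 1" | "z \<ge> 2" by linarith
    then show "(y,z) = (a-1, 0) \<or> (y,z) = (2*a-1, 0)"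
    proof cases
      case 1
      then have ym: "y = a - 1 + a*j" using m by simp
      have "j \<le> 1"
      proof (rule ccontr)
        assume "\<not> j \<le> 1"
        then have "a*2 \<le> a*j" by simp
        then have "int a * 2 \<le> int a * int j" by (metis of_nat_le_iff of_nat_mult of_nat_numeral)
        moreover have "int y = int a - 1 + int a * int j" using ym a0 by simp
        ultimately have "int b * (3*int a - 1) \<le> int b * int y" by (intro mlI) simp_all
        then show False using eI 1 by (simp add: algebra_simps) (use nn in linarith)
      qed
      then consider "j = 0" | "j = 1" by linarith
      then show ?thesis using ym 1 a0 by cases auto
    next
      case 3
      have "int c * 2 \<le> int c * int z" using 3 by (intro mlI) simp_all
      moreover have "3 * (int a * int b) \<le> 2 * int c" using c2 by (metis of_nat_le_iff of_nat_mult of_nat_numeral)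
      ultimately show ?thesis using eI by (simp add: algebra_simps) (use nn in linarith)
    next
      case 2
      show ?thesis using alt
      proof
        assume "3*(a*b) \<le> c"
        then have "3 * (int a * int b) \<le> int c" by (metis of_nat_le_iff of_nat_mult of_nat_numeral)
        then show ?thesis using eI 2 by (simp add: algebra_simps) (use nn in linarith)
      next
        assume tb: "t \<le> b"
        have "j \<ge> 3"
        proof (rule ccontr)
          assume "\<not> j \<ge> 3"
          then have "a*j \<le> a*2" by simp
          moreover have "y + s = a - 1 + a*j" using m 2 by simp
          ultimately show False using sa a0 by linarith
        qed
        then have "int a * 3 \<le> int a * int j" by (intro mlI) simp_all
        moreover have "int (y + s*z) = int a - 1 + int a * int j" using m a0 by simp
        ultimately have h1: "int b * (4*int a - 1) \<le> int b * int (y + s*z)" by (intro mlI) simp_all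
        have h2: "int t * int a \<le> int b * int a" using tb by (intro mult_right_mono) simp_all
        show ?thesis using eI bzI h1 h2 2 by (simp add: algebra_simps) (use nn in linarith)
      qed
    qed
  qed
qed


lemma bigI:
  fixes s C a M c :: nat and BR :: int
  assumes "a > 0" "0 < BR" "int (M*c) - int (s*(C - a)) = int a * BR"
  shows "s*(C - a) < M*c"
proof -
  have "0 < int a * BR" using assms(1,2) by simp
  then have "int (s*(C-a)) < int (M*c)" using assms(3) by linarith
  then show ?thesis by (simp only: of_nat_less_iff)
qed

lemma natle: "int x \<le> int y \<Longrightarrow> x \<le> y" for x y :: nat by simp

lemma caseB:
  fixes a b c s t e :: nat
  assumes se: "s + e = 2*a" and ea: "e < a" and te: "t + e \<le> a" and bt: "2*t \<le> b" and ba: "a \<le> b"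
    and rel: "c + t*a = s*b" and cop: "coprime a b" and t1: "t \<ge> 1"
  shows "p_frobenius 2 [a,b,c] = int ((a-1)*b + c) - int a"
proof -
  define C where "C = (a-1)*b + c"
  have a0: "a > 0" using ea by simp
  have b0: "b > 0" using ba a0 by simp
  have cI: "int c = int s * int b - int t * int a" by (rule relI[OF rel])
  have sI: "int s = 2 * int a - int e" using se by linarith
  have k1: "int t * int b \<le> (int a - int e) * int b" using te by (intro mult_right_mono) simp_all
  have k2: "int t * int a \<le> int t * int b" using ba by (intro mult_left_mono) simp_all
  have k5: "int t * int b \<le> int a * int b" using te by (intro mult_right_mono) simp_all
  have cab: "int a * int b \<le> int c" using k1 k2 unfolding cI sI by (simp add: algebra_simps)
  have "int a * 1 \<le> int a * int b" using b0 by (intro mlI) simp_all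
  then have "int a \<le> int a * int b" by simp
  then have c0: "c > 0" using cab a0 by linarith
  have CI: "int C = (int a - 1) * int b + int c" unfolding C_def using a0 by (simp add: of_nat_diff)
  have Ca: "C \<ge> a"
  proof -
    have "0 \<le> (int a - 1) * int b" using a0 by simp
    then show ?thesis using cab \<open>int a \<le> int a * int b\<close> CI by linarith
  qed
  have GI: "int (C - a) = (int a - 1) * int b + int c - int a" using Ca CI by (simp add: of_nat_diff)
  have \<rho>0: "a - e - 1 < a" using a0 by simp
  have iden: "b*(a - e - 1 + a*2) = C + t*a*1"
  proof -
    have "int (b*(a - e - 1 + a*2)) = int (C + t*a*1)"
      unfolding of_nat_add of_nat_mult CI using ea by (simp add: of_nat_diff cI sI algebra_simps)
    then show ?thesis by (simp only: of_nat_eq_iff)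
  qed
  have res: "(b*(a-e-1)) mod a = (C - a) mod a" using residue_of[OF iden[symmetric] Ca] by simp
  show ?thesis unfolding C_def[symmetric]
  proof (rule finish[OF a0 b0 c0 cop rel Ca \<rho>0 res])
    fix \<rho> assume \<rho>a: "\<rho> < a"
    show "\<exists>y1 z1 y2 z2 y3 z3.
        (y1,z1) \<noteq> (y2,z2) \<and> (y1,z1) \<noteq> (y3,z3) \<and> (y2,z2) \<noteq> (y3,z3) \<and>
        (y1 + s*z1) mod a = \<rho> \<and> (y2 + s*z2) mod a = \<rho> \<and> (y3 + s*z3) mod a = \<rho> \<and>
        b*y1 + c*z1 \<le> C \<and> b*y2 + c*z2 \<le> C \<and> b*y3 + c*z3 \<le> C"
    proof (cases "\<rho> + e < a")
      case True
      have v2: "b*(\<rho>+a) + c*0 \<le> C"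
      proof (rule natle)
        have "int b * (int \<rho> + int a) \<le> int b * (2*int a - int e - 1)" using True by (intro mlI) simp_all
        then show "int (b*(\<rho>+a) + c*0) \<le> int C" using k2 k5 unfolding CI cI sI by (simp add: algebra_simps)
      qed
      have v1: "b*\<rho> + c*0 \<le> C" using v2 by (simp add: algebra_simps)
      have v3: "b*(\<rho>+e) + c*1 \<le> C"
      proof (rule natle)
        have "int b * (int \<rho> + int e) \<le> int b * (int a - 1)" using True by (intro mlI) simp_all
        then show "int (b*(\<rho>+e) + c*1) \<le> int C" unfolding CI by (simp add: algebra_simps)
      qed
      have e3: "\<rho> + e + s*1 = \<rho> + a*2" using se by simp
      show ?thesis
        by (rule three[of \<rho> 0 "\<rho>+a" 0 "\<rho>+e" 1 s \<rho> a 0 1 2]) (use v1 v2 v3 e3 \<rho>a a0 in simp_all)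
    next
      case False
      have v3: "b*(\<rho>+a) + c*0 \<le> C"
      proof (rule natle)
        have "int b * (int \<rho> + int a) \<le> int b * (2*int a - 1)" using \<rho>a by (intro mlI) simp_all
        then show "int (b*(\<rho>+a) + c*0) \<le> int C" using cab unfolding CI by (simp add: algebra_simps)
      qed
      have v1: "b*\<rho> + c*0 \<le> C" using v3 by (simp add: algebra_simps)
      have v2: "b*(\<rho>+e-a) + c*1 \<le> C"
      proof (rule natle)
        have d: "int (\<rho>+e-a) = int \<rho> + int e - int a" using False by (simp add: of_nat_diff)
        have "int b * (int \<rho> + int e - int a) \<le> int b * (int a - 1)" using \<rho>a ea by (intro mlI) simp_all
        then show "int (b*(\<rho>+e-a) + c*1) \<le> int C" unfolding CI of_nat_add of_nat_mult d by (simp add: algebra_simps)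
      qed
      have e2: "\<rho>+e-a + s*1 = \<rho> + a*1" using se False by simp
      show ?thesis
        by (rule three[of \<rho> 0 "\<rho>+e-a" 1 "\<rho>+a" 0 s \<rho> a 0 1 1]) (use v1 v2 v3 e2 \<rho>a a0 in simp_all)
    qed
  next
    fix x y z j assume e: "a*x + b*y + c*z = C - a" and m: "y + s*z = (a-e-1) + a*j"
    consider "j = 0" | "j = 1" | "j = 2" | "j \<ge> 3" by linarith
    then show "(y,z) = (a-e-1, 0) \<or> (y,z) = (2*a-e-1, 0)"
    proof cases
      case 1
      have "z \<le> 0"
      proof (rule zbound[of y s z "a-e-1" 0])
        show "y + s*z = a-e-1" using m 1 by simp
        have "a-e-1 < s" using se ea by linarith
        then show "a-e-1 < (0+1)*s" by simp
      qed
      then show ?thesis using m 1 by simp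
    next
      case 2
      have "z \<le> 0"
      proof (rule zbound[of y s z "a-e-1+a" 0])
        show "y + s*z = a-e-1+a" using m 2 by simp
        have "a-e-1+a < s" using se ea by linarith
        then show "a-e-1+a < (0+1)*s" by simp
      qed
      then have "z = 0" "y = 2*a - e - 1" using m 2 ea by auto
      then show ?thesis by simp
    next
      case 3
      have "z \<le> 1"
      proof (rule zbound[of y s z "a-e-1+a*2" 1])
        show "y + s*z = a-e-1+a*2" using m 3 by simp
        have "a-e-1+a*2 < 2*s" using se ea by linarith
        then show "a-e-1+a*2 < (1+1)*s" by simp
      qed
      moreover have "C - a < C" using a0 Ca by linarith
      ultimately show ?thesis using contra_mid[OF e rel _ iden] m 3 by blast
    next
      case 4
      have ge: "y + s*z \<ge> a - e - 1 + a*3" using m 4 by simp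
      have "s*(C - a) < (a - e - 1 + a*3)*c"
      proof (rule bigI[OF a0])
        have k3: "int s * (int t + 1) \<le> int s * (int b - int t + 1)" using bt by (intro mlI) simp_all
        have k4: "int e * (int t + 1) \<le> int s * (int t + 1)" using sI ea by (intro mult_right_mono) simp_all
        have id: "int e * (int t + 1) = int t * int e + int e" by (simp add: algebra_simps)
        show "0 < int s * (int b - int t + 1) - int t * int e + int t" using k3 k4 id t1 by linarith
        show "int ((a - e - 1 + a*3)*c) - int (s*(C - a)) = int a * (int s * (int b - int t + 1) - int t * int e + int t)"
          unfolding of_nat_mult GI using ea by (simp add: of_nat_diff cI sI algebra_simps)
      qed
      then show ?thesis using contra_big[OF e rel ge] by blast
    qed
  qed
qed


lemma coverC:
  fixes a b c s t e M \<rho> :: nat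
  assumes se: "s = a + e" and ea: "e < a" and rel: "c + t*a = s*b"
    and Mo: "(a-1)*b + c \<le> M" and Me: "(2*a-1)*b \<le> M" and \<rho>a: "\<rho> < a"
  shows "\<exists>y1 z1 y2 z2 y3 z3.
        (y1,z1) \<noteq> (y2,z2) \<and> (y1,z1) \<noteq> (y3,z3) \<and> (y2,z2) \<noteq> (y3,z3) \<and>
        (y1 + s*z1) mod a = \<rho> \<and> (y2 + s*z2) mod a = \<rho> \<and> (y3 + s*z3) mod a = \<rho> \<and>
        b*y1 + c*z1 \<le> M \<and> b*y2 + c*z2 \<le> M \<and> b*y3 + c*z3 \<le> M"
proof -
  have a0: "a > 0" using ea by simp
  have MoI: "(int a - 1) * int b + int c \<le> int M" using Mo a0 by (metis natle of_nat_add of_nat_diff of_nat_le_iff of_nat_mult One_nat_def Suc_leI of_nat_1)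
  have MeI: "(2*int a - 1) * int b \<le> int M"
  proof -
    have "int ((2*a-1)*b) = (2*int a - 1) * int b" using a0 by (simp add: of_nat_diff)
    then show ?thesis using Me by (metis of_nat_le_iff)
  qed
  have v: "b*(\<rho>+a) + c*0 \<le> M"
  proof (rule natle)
    have "int b * (int \<rho> + int a) \<le> int b * (2*int a - 1)" using \<rho>a by (intro mlI) simp_all
    then show "int (b*(\<rho>+a) + c*0) \<le> int M" using MeI by (simp add: algebra_simps)
  qed
  have v1: "b*\<rho> + c*0 \<le> M" using v by (simp add: algebra_simps)
  show ?thesis
  proof (cases "\<rho> < e")
    case True
    have v3: "b*(\<rho>+a-e) + c*1 \<le> M"
    proof (rule natle)
      have d: "int (\<rho>+a-e) = int \<rho> + int a - int e" using ea by (simp add: of_nat_diff)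
      have "int b * (int \<rho> + int a - int e) \<le> int b * (int a - 1)" using True by (intro mlI) simp_all
      then show "int (b*(\<rho>+a-e) + c*1) \<le> int M" using MoI unfolding of_nat_add of_nat_mult d by (simp add: algebra_simps)
    qed
    have e3: "\<rho>+a-e + s*1 = \<rho> + a*2" using se ea by simp
    show ?thesis
      by (rule three[of \<rho> 0 "\<rho>+a" 0 "\<rho>+a-e" 1 s \<rho> a 0 1 2]) (use v1 v v3 e3 \<rho>a a0 in simp_all)
  next
    case False
    have v2: "b*(\<rho>-e) + c*1 \<le> M"
    proof (rule natle)
      have d: "int (\<rho>-e) = int \<rho> - int e" using False by (simp add: of_nat_diff)
      have "int b * (int \<rho> - int e) \<le> int b * (int a - 1)" using \<rho>a by (intro mlI) simp_all
      then show "int (b*(\<rho>-e) + c*1) \<le> int M" using MoI unfolding of_nat_add of_nat_mult d by (simp add: algebra_simps)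
    qed
    have e2: "\<rho>-e + s*1 = \<rho> + a*1" using se False by simp
    show ?thesis
      by (rule three[of \<rho> 0 "\<rho>-e" 1 "\<rho>+a" 0 s \<rho> a 0 1 1]) (use v1 v2 v e2 \<rho>a a0 in simp_all)
  qed
qed

lemma caseC:
  fixes a b c s t e :: nat
  assumes se: "s = a + e" and e1: "e \<ge> 1" and ea: "e < a" and bt: "2*t \<le> b" and ba: "a \<le> b"
    and rel: "c + t*a = s*b" and cop: "coprime a b" and t1: "t \<ge> 1" and s3: "3*(t*a) \<le> s*b"
  shows "t*a < b*e \<Longrightarrow> p_frobenius 2 [a,b,c] = int ((a-1)*b + c) - int a"
    and "b*e < t*a \<Longrightarrow> p_frobenius 2 [a,b,c] = int ((2*a-1)*b) - int a"
proof -
  have a0: "a > 0" using ea by simp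
  have b0: "b > 0" using ba a0 by simp
  have cI: "int c = int s * int b - int t * int a" by (rule relI[OF rel])
  have sI: "int s = int a + int e" using se by simp
  have s3I: "3 * (int t * int a) \<le> int s * int b" using s3 by (metis of_nat_le_iff of_nat_mult of_nat_numeral)
  have "1 * int a \<le> int t * int a" using t1 by (intro mult_right_mono) simp_all
  then have ca: "int a \<le> int c" using s3I cI by linarith
  then have c0: "c > 0" using a0 by linarith
  have t1I: "int t \<ge> 1" "int s \<ge> 1" using t1 se a0 by simp_all
  define Co where "Co = (a-1)*b + c"
  define Ce where "Ce = (2*a-1)*b"
  have CoI: "int Co = (int a - 1) * int b + int c" unfolding Co_def using a0 by (simp add: of_nat_diff)
  have CeI: "int Ce = (2*int a - 1) * int b" unfolding Ce_def using a0 by (simp add: of_nat_diff)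
  have Coa: "Co \<ge> a"
  proof -
    have "0 \<le> (int a - 1) * int b" using a0 by simp
    then have "int a \<le> int Co" using ca CoI by linarith
    then show ?thesis by simp
  qed
  have Cea: "Ce \<ge> a"
  proof -
    have "(2*int a - 1) * int b \<ge> 1 * int b" using a0 by (intro mult_right_mono) simp_all
    then show ?thesis using CeI ba by simp
  qed
  have diff: "int Co - int Ce = int b * int e - int t * int a" unfolding CoI CeI cI sI by (simp add: algebra_simps)
  {
    assume odd: "t*a < b*e"
    have "int (t*a) < int (b*e)" using odd by (simp only: of_nat_less_iff)
    then have "Ce \<le> Co" using diff by simp
    have \<rho>0: "e - 1 < a" using ea by simp
    have iden: "b*(e - 1 + a*2) = Co + t*a*1"
    proof -
      have "int (b*(e - 1 + a*2)) = int (Co + t*a*1)"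
        unfolding of_nat_add of_nat_mult CoI using e1 by (simp add: of_nat_diff cI sI algebra_simps)
      then show ?thesis by (simp only: of_nat_eq_iff)
    qed
    have res: "(b*(e-1)) mod a = (Co - a) mod a" using residue_of[OF iden[symmetric] Coa] by simp
    have GI: "int (Co - a) = (int a - 1) * int b + int c - int a" using Coa CoI by (simp add: of_nat_diff)
    show "p_frobenius 2 [a,b,c] = int ((a-1)*b + c) - int a" unfolding Co_def[symmetric]
    proof (rule finish[OF a0 b0 c0 cop rel Coa \<rho>0 res])
      fix \<rho> assume \<rho>a: "\<rho> < a"
      show "\<exists>y1 z1 y2 z2 y3 z3.
        (y1,z1) \<noteq> (y2,z2) \<and> (y1,z1) \<noteq> (y3,z3) \<and> (y2,z2) \<noteq> (y3,z3) \<and>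
        (y1 + s*z1) mod a = \<rho> \<and> (y2 + s*z2) mod a = \<rho> \<and> (y3 + s*z3) mod a = \<rho> \<and>
        b*y1 + c*z1 \<le> Co \<and> b*y2 + c*z2 \<le> Co \<and> b*y3 + c*z3 \<le> Co"
        by (rule coverC[OF se ea rel _ _ \<rho>a]) (use \<open>Ce \<le> Co\<close> in \<open>simp_all add: Co_def Ce_def\<close>)
    next
      fix x y z j assume e: "a*x + b*y + c*z = Co - a" and m: "y + s*z = (e-1) + a*j"
      consider "j = 0" | "j = 1" | "j = 2" | "j \<ge> 3" by linarith
      then show "(y,z) = (e-1, 0) \<or> (y,z) = (a+e-1, 0)"
      proof cases
        case 1
        have "z \<le> 0"
        proof (rule zbound[of y s z "e-1" 0])
          show "y + s*z = e-1" using m 1 by simp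
          have "e-1 < s" using se a0 by linarith
          then show "e-1 < (0+1)*s" by simp
        qed
        then show ?thesis using m 1 by simp
      next
        case 2
        have "z \<le> 0"
        proof (rule zbound[of y s z "e-1+a" 0])
          show "y + s*z = e-1+a" using m 2 by simp
          have "e-1+a < s" using se e1 a0 by linarith
          then show "e-1+a < (0+1)*s" by simp
        qed
        then have "z = 0" "y = a+e-1" using m 2 e1 by auto
        then show ?thesis by simp
      next
        case 3
        have "z \<le> 1"
        proof (rule zbound[of y s z "e-1+a*2" 1])
          show "y + s*z = e-1+a*2" using m 3 by simp
          have "e-1+a*2 < 2*s" using se e1 a0 by linarith
          then show "e-1+a*2 < (1+1)*s" by simp
        qed
        moreover have "Co - a < Co" using a0 Coa by linarith
        ultimately show ?thesis using contra_mid[OF e rel _ iden] m 3 by blast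
      next
        case 4
        have ge: "y + s*z \<ge> e - 1 + a*3" using m 4 by simp
        have "s*(Co - a) < (e - 1 + a*3)*c"
        proof (rule bigI[OF a0])
          have k3: "0 \<le> int s * (int b - 2*int t)" using bt by (intro mult_nonneg_nonneg) simp_all
          have k4: "0 \<le> int t * int e" by simp
          have id: "int s * (int b - 2 * int t + 1) + 2 * int t * int e + int t = int s * (int b - 2*int t) + int s + 2 * (int t * int e) + int t"
            by (simp add: algebra_simps)
          show "0 < int s * (int b - 2 * int t + 1) + 2 * int t * int e + int t" unfolding id using k3 k4 t1I by linarith
          show "int ((e - 1 + a*3)*c) - int (s*(Co - a)) = int a * (int s * (int b - 2 * int t + 1) + 2 * int t * int e + int t)"
            unfolding of_nat_mult GI using e1 by (simp add: of_nat_diff cI sI algebra_simps)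
        qed
        then show ?thesis using contra_big[OF e rel ge] by blast
      qed
    qed
  }
  {
    assume even: "b*e < t*a"
    have "int (b*e) < int (t*a)" using even by (simp only: of_nat_less_iff)
    then have "Co \<le> Ce" using diff by simp
    have \<rho>0: "a - 1 < a" using a0 by simp
    have iden: "b*(a - 1 + a*1) = Ce + t*a*0" unfolding Ce_def using a0 by (simp add: algebra_simps)
    have res: "(b*(a-1)) mod a = (Ce - a) mod a" using residue_of[OF iden[symmetric] Cea] by simp
    have GI: "int (Ce - a) = (2*int a - 1) * int b - int a" using Cea CeI by (simp add: of_nat_diff)
    show "p_frobenius 2 [a,b,c] = int ((2*a-1)*b) - int a" unfolding Ce_def[symmetric]
    proof (rule finish[OF a0 b0 c0 cop rel Cea \<rho>0 res])
      fix \<rho> assume \<rho>a: "\<rho> < a"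
      show "\<exists>y1 z1 y2 z2 y3 z3.
        (y1,z1) \<noteq> (y2,z2) \<and> (y1,z1) \<noteq> (y3,z3) \<and> (y2,z2) \<noteq> (y3,z3) \<and>
        (y1 + s*z1) mod a = \<rho> \<and> (y2 + s*z2) mod a = \<rho> \<and> (y3 + s*z3) mod a = \<rho> \<and>
        b*y1 + c*z1 \<le> Ce \<and> b*y2 + c*z2 \<le> Ce \<and> b*y3 + c*z3 \<le> Ce"
        by (rule coverC[OF se ea rel _ _ \<rho>a]) (use \<open>Co \<le> Ce\<close> in \<open>simp_all add: Co_def Ce_def\<close>)
    next
      fix x y z j assume e: "a*x + b*y + c*z = Ce - a" and m: "y + s*z = (a-1) + a*j"
      consider "j = 0" | "j = 1" | "j \<ge> 2" by linarith
      then show "(y,z) = (a-1, 0) \<or> (y,z) = (a-1-e, 1)"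
      proof cases
        case 1
        have "z \<le> 0"
        proof (rule zbound[of y s z "a-1" 0])
          show "y + s*z = a-1" using m 1 by simp
          have "a-1 < s" using se a0 by linarith
          then show "a-1 < (0+1)*s" by simp
        qed
        then show ?thesis using m 1 by simp
      next
        case 2
        have "z \<le> 1"
        proof (rule zbound[of y s z "a-1+a" 1])
          show "y + s*z = a-1+a" using m 2 by simp
          have "a-1+a < 2*s" using se a0 by linarith
          then show "a-1+a < (1+1)*s" by simp
        qed
        then consider "z = 0" | "z = 1" by linarith
        then show ?thesis
        proof cases
          case 1
          have "Ce - a < Ce" using a0 Cea by linarith
          then show ?thesis using contra_mid[OF e rel _ iden] m 2 1 by simp
        next
          case z1: 2
          then have "y = a - 1 - e" using m 2 se by simp
          then show ?thesis using z1 by simp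
        qed
      next
        case 3
        have ge: "y + s*z \<ge> a - 1 + a*2" using m 3 by simp
        have "s*(Ce - a) < (a - 1 + a*2)*c"
        proof (rule bigI[OF a0])
          show "0 < int s * int b - 3 * int t * int a + int t + int s" using s3I t1I by linarith
          show "int ((a - 1 + a*2)*c) - int (s*(Ce - a)) = int a * (int s * int b - 3 * int t * int a + int t + int s)"
            unfolding of_nat_mult GI using a0 by (simp add: of_nat_diff cI sI algebra_simps)
        qed
        then show ?thesis using contra_big[OF e rel ge] by blast
      qed
    qed
  }
qed


lemma caseD:
  fixes a b c s t :: nat
  assumes as: "a = s + t" and ts: "2*t < s" and b3: "3*t \<le> b" and ba: "a \<le> b"
    and rel: "c + t*a = s*b" and cop: "coprime a b" and t1: "t \<ge> 1"
  shows "p_frobenius 2 [a,b,c] = int ((2*t-1)*b + 2*c) - int a"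
proof -
  define C where "C = (2*t-1)*b + 2*c"
  have a0: "a > 0" using as t1 by simp
  have b0: "b > 0" using ba a0 by simp
  have cI: "int c = int s * int b - int t * int a" by (rule relI[OF rel])
  have aI: "int a = int s + int t" using as by simp
  have t1I: "int t \<ge> 1" using t1 by simp
  have tsI: "2 * int t + 1 \<le> int s" using ts by simp
  have baI: "int a \<le> int b" using ba by simp
  have k1: "(2 * int t + 1) * int b \<le> int s * int b" using tsI by (intro mult_right_mono) simp_all
  have k2: "int t * int a \<le> int t * int b" using baI by (intro mult_left_mono) simp_all
  have k2': "int a \<le> int b" using baI .
  have k1': "2 * (int t * int b) + int b \<le> int s * int b" using k1 by (simp add: algebra_simps)
  have tb0: "0 \<le> int t * int b" by simp
  then have ca: "int a \<le> int c" using k1' k2 baI cI by linarith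
  then have c0: "c > 0" using a0 by linarith
  have CI: "int C = (2*int t - 1) * int b + 2 * int c" unfolding C_def using t1 by (simp add: of_nat_diff)
  have Ca: "C \<ge> a"
  proof -
    have "0 \<le> (2*int t - 1) * int b" using t1I by simp
    then have "int a \<le> int C" using ca CI by linarith
    then show ?thesis by simp
  qed
  have GI: "int (C - a) = (2*int t - 1) * int b + 2 * int c - int a" using Ca CI by (simp add: of_nat_diff)
  have \<rho>0: "a - 1 < a" using a0 by simp
  have iden: "b*(a - 1 + a*1) = C + t*a*2"
  proof -
    have "int (b*(a - 1 + a*1)) = int (C + t*a*2)"
      unfolding of_nat_add of_nat_mult CI using a0 by (simp add: of_nat_diff cI aI algebra_simps)
    then show ?thesis by (simp only: of_nat_eq_iff)
  qed
  have res: "(b*(a-1)) mod a = (C - a) mod a" using residue_of[OF iden[symmetric] Ca] by simp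
  show ?thesis unfolding C_def[symmetric]
  proof (rule finish[OF a0 b0 c0 cop rel Ca \<rho>0 res])
    fix \<rho> assume \<rho>a: "\<rho> < a"
    show "\<exists>y1 z1 y2 z2 y3 z3.
        (y1,z1) \<noteq> (y2,z2) \<and> (y1,z1) \<noteq> (y3,z3) \<and> (y2,z2) \<noteq> (y3,z3) \<and>
        (y1 + s*z1) mod a = \<rho> \<and> (y2 + s*z2) mod a = \<rho> \<and> (y3 + s*z3) mod a = \<rho> \<and>
        b*y1 + c*z1 \<le> C \<and> b*y2 + c*z2 \<le> C \<and> b*y3 + c*z3 \<le> C"
    proof (cases "s \<le> \<rho>")
      case True
      define y0 where "y0 = \<rho> - s"
      have y0t: "y0 < t" "\<rho> = s + y0" using True \<rho>a as unfolding y0_def by linarith+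
      have v1: "b*y0 + c*1 \<le> C"
      proof (rule natle)
        have "int b * int y0 \<le> int b * (2 * int t - 1)" using y0t by (intro mlI) simp_all
        then show "int (b*y0 + c*1) \<le> int C" using c0 unfolding CI by (simp add: algebra_simps)
      qed
      have v2: "b*\<rho> + c*0 \<le> C"
      proof (rule natle)
        have "int b * int \<rho> \<le> int b * (int a - 1)" using \<rho>a by (intro mlI) simp_all
        moreover have "2 * int t * int b \<le> int a * int b" using ts as by (intro mult_right_mono) simp_all
        ultimately show "int (b*\<rho> + c*0) \<le> int C" using k2 unfolding CI by (simp add: cI aI algebra_simps)
      qed
      have v3: "b*(y0+t) + c*2 \<le> C"
      proof (rule natle)
        have "int b * (int y0 + int t) \<le> int b * (2 * int t - 1)" using y0t by (intro mlI) simp_all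
        then show "int (b*(y0+t) + c*2) \<le> int C" unfolding CI by (simp add: algebra_simps)
      qed
      have e3: "y0+t + s*2 = \<rho> + a*1" using y0t as by simp
      show ?thesis
        by (rule three[of y0 1 \<rho> 0 "y0+t" 2 s \<rho> a 0 0 1]) (use v1 v2 v3 e3 y0t \<rho>a a0 in simp_all)
    next
      case False
      show ?thesis
      proof (cases "\<rho> + t < s")
        case True
        have v2: "b*(\<rho>+a) + c*0 \<le> C"
        proof (rule natle)
          have "int b * (int \<rho> + int a) \<le> int b * (2 * int s - 1)" using True as by (intro mlI) simp_all
          moreover have "int t * int a \<le> int t * int b" using k2 .
          ultimately show "int (b*(\<rho>+a) + c*0) \<le> int C" unfolding CI by (simp add: cI aI algebra_simps)
        qed
        have v1: "b*\<rho> + c*0 \<le> C" using v2 by (simp add: algebra_simps)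
        have v3: "b*(\<rho>+t) + c*1 \<le> C"
        proof (rule natle)
          have "int b * (int \<rho> + int t) \<le> int b * (int s - 1)" using True by (intro mlI) simp_all
          moreover have "int t * int a \<le> 2 * (int t * int b)" using k2 \<open>0 \<le> int t * int b\<close> by linarith
          ultimately show "int (b*(\<rho>+t) + c*1) \<le> int C" unfolding CI by (simp add: cI aI algebra_simps)
        qed
        have e3: "\<rho>+t + s*1 = \<rho> + a*1" using as by simp
        show ?thesis
          by (rule three[of \<rho> 0 "\<rho>+a" 0 "\<rho>+t" 1 s \<rho> a 0 1 1]) (use v1 v2 v3 e3 \<rho>a a0 t1 in simp_all)
      next
        case False2: False
        have v2: "b*(\<rho>+t) + c*1 \<le> C"
        proof (rule natle)
          have "int b * (int \<rho> + int t) \<le> int b * (int s + int t - 1)" using False by (intro mlI) simp_all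
          then show "int (b*(\<rho>+t) + c*1) \<le> int C" using k2 unfolding CI by (simp add: cI aI algebra_simps)
        qed
        have v1: "b*\<rho> + c*0 \<le> C" using v2 by (simp add: algebra_simps)
        have v3: "b*(\<rho>+t-s) + c*2 \<le> C"
        proof (rule natle)
          have d: "int (\<rho>+t-s) = int \<rho> + int t - int s" using False2 by (simp add: of_nat_diff)
          have "int b * (int \<rho> + int t - int s) \<le> int b * (2 * int t - 1)" using False t1 by (intro mlI) simp_all
          then show "int (b*(\<rho>+t-s) + c*2) \<le> int C" unfolding CI of_nat_add of_nat_mult d by (simp add: algebra_simps)
        qed
        have e3: "\<rho>+t-s + s*2 = \<rho> + a*1" using as False2 by simp
        show ?thesis
          by (rule three[of \<rho> 0 "\<rho>+t" 1 "\<rho>+t-s" 2 s \<rho> a 0 1 1]) (use v1 v2 v3 e3 \<rho>a a0 as in simp_all)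
      qed
    qed
  next
    fix x y z j assume e: "a*x + b*y + c*z = C - a" and m: "y + s*z = (a-1) + a*j"
    consider "j = 0" | "j = 1" | "j \<ge> 2" by linarith
    then show "(y,z) = (a-1, 0) \<or> (y,z) = (t-1, 1)"
    proof cases
      case 1
      have "z \<le> 1"
      proof (rule zbound[of y s z "a-1" 1])
        show "y + s*z = a-1" using m 1 by simp
        have "a-1 < 2*s" using as ts by linarith
        then show "a-1 < (1+1)*s" by simp
      qed
      then consider "z = 0" | "z = 1" by linarith
      then show ?thesis using m 1 as t1 by cases auto
    next
      case 2
      have "z \<le> 2"
      proof (rule zbound[of y s z "a-1+a*1" 2])
        show "y + s*z = a-1+a*1" using m 2 by simp
        have "a-1+a*1 < 3*s" using as ts by linarith
        then show "a-1+a*1 < (2+1)*s" by simp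
      qed
      moreover have "C - a < C" using a0 Ca by linarith
      ultimately show ?thesis using contra_mid[OF e rel _ iden] m 2 by blast
    next
      case 3
      have ge: "y + s*z \<ge> a - 1 + a*2" using m 3 by simp
      have "s*(C - a) < (a - 1 + a*2)*c"
      proof (rule bigI[OF a0])
        have k3: "(2*int t + 1) * (2*int t + 1) \<le> int s * (int b - int t + 1)"
          using tsI b3 by (intro mult_mono) simp_all
        have id: "(2*int t + 1) * (2*int t + 1) = 4 * (int t * int t) + 4 * int t + 1" by (simp add: algebra_simps)
        have tt: "0 \<le> int t * int t" by simp
        show "0 < int s * (int b - int t + 1) - 3 * int t * int t + int t" using k3 id tt t1I by linarith
        show "int ((a - 1 + a*2)*c) - int (s*(C - a)) = int a * (int s * (int b - int t + 1) - 3 * int t * int t + int t)"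
          unfolding of_nat_mult GI using a0 by (simp add: of_nat_diff cI aI algebra_simps)
      qed
      then show ?thesis using contra_big[OF e rel ge] by blast
    qed
  qed
qed


lemma partA:
  assumes hi: "i \<ge> 3" and hk: "k \<ge> i+4"
  shows "p_frobenius 2 [lucas i, lucas (i+2), lucas (i+k)] = (3 * int (lucas i) - 1) * int (lucas (i+2)) - int (lucas i)"
proof -
  obtain A B where AB: "A \<le> B" "1 \<le> B" "B \<le> 2*A+1"
    and L: "lucas i = 3*A + 4*B" "lucas (i+2) = 7*A + 11*B"
    and F: "fib (i-3) = A" "fib (i-2) = B" "fib (i-1) = A + B" "fib i = A + 2*B" "fib (i+1) = 2*A + 3*B"
    "fib (i+2) = 3*A + 5*B" "fib (i+3) = 5*A + 8*B" "fib (i+4) = 8*A + 13*B" "fib (i+5) = 13*A + 21*B"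
    and i3: "i = 3 \<longleftrightarrow> A = 0"
    by (rule ctx[OF hi])
  define a where "a = lucas i"
  define b where "b = lucas (i+2)"
  define c where "c = lucas (i+k)"
  define s where "s = fib k"
  define t where "t = fib (k-2)"
  have rel: "c + t*a = s*b" unfolding a_def b_def c_def s_def t_def by (rule relk) (use hk in simp)
  have a1: "a \<ge> 1" unfolding a_def using L AB by simp
  have ba: "2*a \<le> b" unfolding a_def b_def using L by simp
  have "fib (i+4) \<le> fib k" by (rule fib_mono) (use hk in simp)
  then have sa: "3*a \<le> s" unfolding a_def s_def using L F AB by simp
  have ts: "t \<le> s" unfolding t_def s_def by (rule fib_mono) simp
  have cop: "coprime a b" unfolding a_def b_def by (rule coprime_lucas2)
  have cI: "int c = int s * int b - int t * int a" by (rule relI[OF rel])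
  have f1: "int t * int a \<le> int s * int a" using ts by (intro mult_right_mono) simp_all
  have f2: "3 * int a * (int b - int a) \<le> int s * (int b - int a)" using sa ba by (intro mult_right_mono) simp_all
  have f3: "2 * int a * int a \<le> int b * int a" using ba by (intro mult_right_mono) simp_all
  have c2: "3*(a*b) \<le> 2*c"
  proof -
    have "3 * (int a * int b) \<le> 2 * int c" using f1 f2 f3 cI by (simp add: algebra_simps)
    then show ?thesis by (metis of_nat_le_iff of_nat_mult of_nat_numeral)
  qed
  have alt: "t \<le> b \<or> 3*(a*b) \<le> c"
  proof (cases "k = i+4")
    case True
    then have "t = fib (i+2)" unfolding t_def by simp
    then show ?thesis using F L unfolding b_def by simp
  next
    case False
    then have k5: "k \<ge> i+5" using hk by simp
    have "fib (i+5) \<le> fib k" by (rule fib_mono) (use k5 in simp)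
    then have s3: "3*a \<le> s" unfolding a_def s_def using L F AB by simp
    have "fib (i+4) \<le> fib (k-1)" by (rule fib_mono) (use k5 in simp)
    moreover have "fib k = fib (k-1) + fib (k-2)" by (rule fib_rec2) (use k5 in simp)
    ultimately have st3: "3*a \<le> s - t" unfolding a_def s_def t_def using L F AB by simp
    have g1: "3 * int a * (int b - int a) \<le> int s * (int b - int a)" using s3 ba by (intro mult_right_mono) simp_all
    have "int (3*a) \<le> int (s - t)" using st3 by (simp only: of_nat_le_iff)
    then have st3I: "3 * int a \<le> int s - int t" using ts by (simp add: of_nat_diff)
    have g2: "3 * int a * int a \<le> (int s - int t) * int a" using st3I by (intro mult_right_mono) simp_all
    have "3 * (int a * int b) \<le> int c" using g1 g2 cI by (simp add: algebra_simps)
    then show ?thesis by (metis of_nat_le_iff of_nat_mult of_nat_numeral)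
  qed
  have "p_frobenius 2 [a,b,c] = int ((3*a-1)*b) - int a"
    by (rule caseA[OF a1 ba rel cop sa c2 alt])
  then show ?thesis using a1 unfolding a_def b_def c_def by (simp add: of_nat_diff)
qed


lemma partB:
  assumes hi: "i \<ge> 3"
  shows "p_frobenius 2 [lucas i, lucas (i+2), lucas (2*i+3)] = (int (lucas i) - 1) * int (lucas (i+2)) + int (lucas (2*i+3)) - int (lucas i)"
proof -
  obtain A B where AB: "A \<le> B" "1 \<le> B" "B \<le> 2*A+1"
    and L: "lucas i = 3*A + 4*B" "lucas (i+2) = 7*A + 11*B"
    and F: "fib (i-3) = A" "fib (i-2) = B" "fib (i-1) = A + B" "fib i = A + 2*B" "fib (i+1) = 2*A + 3*B"
    "fib (i+2) = 3*A + 5*B" "fib (i+3) = 5*A + 8*B" "fib (i+4) = 8*A + 13*B" "fib (i+5) = 13*A + 21*B"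
    and i3: "i = 3 \<longleftrightarrow> A = 0"
    by (rule ctx[OF hi])
  define a where "a = lucas i"
  define b where "b = lucas (i+2)"
  define c where "c = lucas (2*i+3)"
  have rel: "c + fib (i+1) * a = fib (i+3) * b"
  proof -
    have "lucas (i+(i+3)) + fib (i+3-2) * lucas i = fib (i+3) * lucas (i+2)" by (rule relk) simp
    moreover have "i+(i+3) = 2*i+3" "i+3-2 = i+1" by simp_all
    ultimately show ?thesis unfolding a_def b_def c_def by simp
  qed
  have cop: "coprime a b" unfolding a_def b_def by (rule coprime_lucas2)
  have "p_frobenius 2 [a,b,c] = int ((a-1)*b + c) - int a"
    by (rule caseB[OF _ _ _ _ _ rel cop, of "fib (i-3)"]) (use L F AB in \<open>simp_all add: a_def b_def\<close>)
  moreover have "a \<ge> 1" unfolding a_def using L AB by simp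
  ultimately show ?thesis unfolding a_def b_def c_def by (simp add: of_nat_diff)
qed

lemma partC:
  assumes hi: "i \<ge> 3"
  shows "(odd i \<longrightarrow> p_frobenius 2 [lucas i, lucas (i+2), lucas (2*i+2)] = (int (lucas i) - 1) * int (lucas (i+2)) + int (lucas (2*i+2)) - int (lucas i))
    \<and> (even i \<longrightarrow> p_frobenius 2 [lucas i, lucas (i+2), lucas (2*i+2)] = (2 * int (lucas i) - 1) * int (lucas (i+2)) - int (lucas i))"
proof -
  obtain A B where AB: "A \<le> B" "1 \<le> B" "B \<le> 2*A+1"
    and L: "lucas i = 3*A + 4*B" "lucas (i+2) = 7*A + 11*B"
    and F: "fib (i-3) = A" "fib (i-2) = B" "fib (i-1) = A + B" "fib i = A + 2*B" "fib (i+1) = 2*A + 3*B"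
    "fib (i+2) = 3*A + 5*B" "fib (i+3) = 5*A + 8*B" "fib (i+4) = 8*A + 13*B" "fib (i+5) = 13*A + 21*B"
    and i3: "i = 3 \<longleftrightarrow> A = 0"
    by (rule ctx[OF hi])
  obtain j where ij: "i = j + 3" using hi by (metis add.commute le_Suc_ex)
  have Aj: "A = fib j" "B = fib (j+1)" using F(1,2) ij by simp_all
  have cas: "int B ^ 2 - int B * int A - int A ^ 2 = (-1)^j" unfolding Aj by (rule cassini_j)
  define a where "a = lucas i"
  define b where "b = lucas (i+2)"
  define c where "c = lucas (2*i+2)"
  define s where "s = fib (i+2)"
  define t where "t = fib i"
  define e where "e = fib (i-2)"
  have rel: "c + t * a = s * b"
  proof -
    have h: "lucas (i+(i+2)) + fib (i+2-2) * lucas i = fib (i+2) * lucas (i+2)" by (rule relk) simp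
    have e: "i+(i+2) = 2*i+2" "i+2-2 = i" by simp_all
    show ?thesis using h unfolding a_def b_def c_def s_def t_def e .
  qed
  have cop: "coprime a b" unfolding a_def b_def by (rule coprime_lucas2)
  have vals: "a = 3*A + 4*B" "b = 7*A + 11*B" "s = 3*A + 5*B" "t = A + 2*B" "e = B"
    unfolding a_def b_def s_def t_def e_def using L F by simp_all
  have se: "s = a + e" and e1: "e \<ge> 1" and ea: "e < a" and bt: "2*t \<le> b" and ba: "a \<le> b" and t1: "t \<ge> 1"
    using vals AB by simp_all
  have s3: "3*(t*a) \<le> s*b" unfolding vals by (simp add: algebra_simps)
  have diff: "int b * int e - int t * int a = 3 * (-1)^j"
    unfolding vals using cas by (simp add: algebra_simps power2_eq_square)
  have a1: "a \<ge> 1" using vals AB by simp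
  show ?thesis
  proof (intro conjI impI)
    assume "odd i"
    then have "even j" using ij by simp
    then have "int b * int e - int t * int a = 3" using diff by simp
    then have "int (t*a) < int (b*e)" by simp
    then have lt: "t*a < b*e" by (simp only: of_nat_less_iff)
    have "p_frobenius 2 [a,b,c] = int ((a-1)*b + c) - int a"
      by (rule caseC(1)[OF se e1 ea bt ba rel cop t1 s3 lt])
    then show "p_frobenius 2 [lucas i, lucas (i+2), lucas (2*i+2)] = (int (lucas i) - 1) * int (lucas (i+2)) + int (lucas (2*i+2)) - int (lucas i)"
      using a1 unfolding a_def b_def c_def by (simp add: of_nat_diff)
  next
    assume "even i"
    then have "odd j" using ij by simp
    then have "int b * int e - int t * int a = -3" using diff by simp
    then have "int (b*e) < int (t*a)" by simp
    then have lt: "b*e < t*a" by (simp only: of_nat_less_iff)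
    have "p_frobenius 2 [a,b,c] = int ((2*a-1)*b) - int a"
      by (rule caseC(2)[OF se e1 ea bt ba rel cop t1 s3 lt])
    then show "p_frobenius 2 [lucas i, lucas (i+2), lucas (2*i+2)] = (2 * int (lucas i) - 1) * int (lucas (i+2)) - int (lucas i)"
      using a1 unfolding a_def b_def c_def by (simp add: of_nat_diff)
  qed
qed

lemma partD:
  assumes hi: "i \<ge> 3"
  shows "p_frobenius 2 [lucas i, lucas (i+2), lucas (2*i+1)]
        = (2 * int (fib (i-1)) - 1) * int (lucas (i+2)) + 2 * int (lucas (2*i+1)) - int (lucas i)"
proof -
  obtain A B where AB: "A \<le> B" "1 \<le> B" "B \<le> 2*A+1"
    and L: "lucas i = 3*A + 4*B" "lucas (i+2) = 7*A + 11*B"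
    and F: "fib (i-3) = A" "fib (i-2) = B" "fib (i-1) = A + B" "fib i = A + 2*B" "fib (i+1) = 2*A + 3*B"
    "fib (i+2) = 3*A + 5*B" "fib (i+3) = 5*A + 8*B" "fib (i+4) = 8*A + 13*B" "fib (i+5) = 13*A + 21*B"
    and i3: "i = 3 \<longleftrightarrow> A = 0"
    by (rule ctx[OF hi])
  define a where "a = lucas i"
  define b where "b = lucas (i+2)"
  define c where "c = lucas (2*i+1)"
  define s where "s = fib (i+1)"
  define t where "t = fib (i-1)"
  have rel: "c + t * a = s * b"
  proof -
    have h: "lucas (i+(i+1)) + fib (i+1-2) * lucas i = fib (i+1) * lucas (i+2)" by (rule relk) (use hi in simp)
    have e: "i+(i+1) = 2*i+1" "i+1-2 = i-1" using hi by simp_all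
    show ?thesis using h unfolding a_def b_def c_def s_def t_def e .
  qed
  have cop: "coprime a b" unfolding a_def b_def by (rule coprime_lucas2)
  have vals: "a = 3*A + 4*B" "b = 7*A + 11*B" "s = 2*A + 3*B" "t = A + B"
    unfolding a_def b_def s_def t_def using L F by simp_all
  have as: "a = s + t" and ts: "2*t < s" and b3: "3*t \<le> b" and ba: "a \<le> b" and t1: "t \<ge> 1"
    using vals AB by simp_all
  have "p_frobenius 2 [a,b,c] = int ((2*t-1)*b + 2*c) - int a"
    by (rule caseD[OF as ts b3 ba rel cop t1])
  then show ?thesis using t1 unfolding a_def b_def c_def t_def by (simp add: of_nat_diff)
qed

lemma partE: "p_frobenius 2 [lucas 3, lucas 5, lucas 6] = 61"
proof -
  have v: "lucas 3 = 4" "lucas 5 = 11" "lucas 6 = 18" by (simp_all add: numeral_eq_Suc)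
  have h5: "(3::nat) + 2 = 5" by simp
  have "coprime (lucas 3) (lucas 5)" using coprime_lucas2[of 3] unfolding h5 .
  then have cop: "coprime (4::nat) 11" unfolding v .
  have "p_frobenius 2 [4, 11, 18] = int 65 - int 4"
  proof (rule finish[where a=4 and b=11 and c=18 and s=2 and t=1 and C=65 and ?\<rho>0.0=3 and ?P1.0="(3,0)" and ?P2.0="(1,1)"])
    show "coprime (4::nat) 11" by (rule cop)
    fix \<rho> :: nat assume "\<rho> < 4"
    then consider "\<rho> = 0" | "\<rho> = 1" | "\<rho> = 2" | "\<rho> = 3" by linarith
    then show "\<exists>y1 z1 y2 z2 y3 z3.
        (y1,z1) \<noteq> (y2,z2) \<and> (y1,z1) \<noteq> (y3,z3) \<and> (y2,z2) \<noteq> (y3,z3) \<and>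
        (y1 + 2*z1) mod 4 = \<rho> \<and> (y2 + 2*z2) mod 4 = \<rho> \<and> (y3 + 2*z3) mod 4 = \<rho> \<and>
        11*y1 + 18*z1 \<le> (65::nat) \<and> 11*y2 + 18*z2 \<le> (65::nat) \<and> 11*y3 + 18*z3 \<le> (65::nat)"
    proof cases
      case 1 then show ?thesis by (intro exI[of _ 0] exI[of _ 2] exI[of _ 0] exI[of _ 1]) simp
    next
      case 2 then show ?thesis by (intro exI[of _ 1] exI[of _ 2] exI[of _ 3] exI[of _ 1] exI[of _ 0]) simp
    next
      case 3 then show ?thesis by (intro exI[of _ 2] exI[of _ 0] exI[of _ 1] exI[of _ 2]) simp
    next
      case 4 then show ?thesis by (intro exI[of _ 3] exI[of _ 0] exI[of _ 1] exI[of _ 1] exI[of _ 1] exI[of _ 3]) simp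
    qed
  next
    fix x y z j :: nat assume "4*x + 11*y + 18*z = 65 - 4"
    then have "4*x + 11*y + 18*z = 61" by simp
    then have "(y = 3 \<and> z = 0) \<or> (y = 1 \<and> z = 1)" by presburger
    then show "(y,z) = (3,0) \<or> (y,z) = (1,1)" by auto
  qed simp_all
  then show ?thesis using v by simp
qed


lemma partF:
  assumes hi: "i \<ge> 3" and hk: "k \<ge> 3"
  shows "let r = (int (lucas i) - 1) div int (fib k) in
        (r \<ge> 2 \<longleftrightarrow> k \<le> i \<and> (i, k) \<noteq> (3, 3))
      \<and> (r \<ge> 2 \<longrightarrow>
          ((int (lucas i) - r * int (fib k)) * int (lucas (i+2)) \<ge> int (fib (k-2)) * int (lucas i) \<longrightarrow>
             p_frobenius 2 [lucas i, lucas (i+2), lucas (i+k)]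
               = (int (lucas i) - r * int (fib k) - 1) * int (lucas (i+2)) + (r + 2) * int (lucas (i+k)) - int (lucas i))
        \<and> ((int (lucas i) - r * int (fib k)) * int (lucas (i+2)) < int (fib (k-2)) * int (lucas i) \<longrightarrow>
             p_frobenius 2 [lucas i, lucas (i+2), lucas (i+k)]
               = (int (fib k) - 1) * int (lucas (i+2)) + (r + 1) * int (lucas (i+k)) - int (lucas i)))"
proof -
  obtain A B where AB: "A \<le> B" "1 \<le> B" "B \<le> 2*A+1"
    and L: "lucas i = 3*A + 4*B" "lucas (i+2) = 7*A + 11*B"
    and F: "fib (i-3) = A" "fib (i-2) = B" "fib (i-1) = A + B" "fib i = A + 2*B" "fib (i+1) = 2*A + 3*B"
    "fib (i+2) = 3*A + 5*B" "fib (i+3) = 5*A + 8*B" "fib (i+4) = 8*A + 13*B" "fib (i+5) = 13*A + 21*B"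
    and i3: "i = 3 \<longleftrightarrow> A = 0"
    by (rule ctx[OF hi])
  define a where "a = lucas i"
  define b where "b = lucas (i+2)"
  define c where "c = lucas (i+k)"
  define s where "s = fib k"
  define t where "t = fib (k-2)"
  define rn where "rn = (a - 1) div s"
  define qn where "qn = a - rn*s"
  have a1: "a \<ge> 1" unfolding a_def using L AB by simp
  have s1: "s \<ge> 1" unfolding s_def using fib_neq_0_nat[of k] hk by simp
  have t1: "t \<ge> 1" unfolding t_def using fib_neq_0_nat[of "k-2"] hk by simp
  have rI: "(int (lucas i) - 1) div int (fib k) = int rn"
  proof -
    have "int (lucas i) - 1 = int (a - 1)" using a1 unfolding a_def by (simp add: of_nat_diff)
    then show ?thesis unfolding rn_def s_def by (simp add: zdiv_int)
  qed
  have r2: "int rn \<ge> 2 \<longleftrightarrow> 2*s \<le> a - 1"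
  proof -
    have "int rn \<ge> 2 \<longleftrightarrow> 2 \<le> rn" by simp
    also have "\<dots> \<longleftrightarrow> 2*s \<le> a - 1" unfolding rn_def using s1 by (simp add: less_eq_div_iff_mult_less_eq)
    finally show ?thesis .
  qed
  have iff: "2*s \<le> a - 1 \<longleftrightarrow> k \<le> i \<and> (i, k) \<noteq> (3, 3)"
  proof
    assume h: "2*s \<le> a - 1"
    show "k \<le> i \<and> (i, k) \<noteq> (3, 3)"
    proof (intro conjI)
      show "k \<le> i"
      proof (rule ccontr)
        assume "\<not> k \<le> i"
        then have "fib (i+1) \<le> fib k" by (intro fib_mono) simp
        then show False using h F L AB unfolding a_def s_def by simp
      qed
      show "(i, k) \<noteq> (3, 3)"
      proof
        assume "(i,k) = (3,3)"
        then have "a = 4" "s = 2" unfolding a_def s_def by (simp_all add: numeral_eq_Suc)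
        then show False using h by simp
      qed
    qed
  next
    assume h: "k \<le> i \<and> (i, k) \<noteq> (3, 3)"
    then have "i \<noteq> 3" using hk by auto
    then have A1: "A \<ge> 1" using i3 by simp
    have "fib k \<le> fib i" using h by (intro fib_mono) simp
    then show "2*s \<le> a - 1" using A1 F L unfolding a_def s_def by simp
  qed
  have main: "int rn \<ge> 2 \<Longrightarrow>
      (int t * int a \<le> int qn * int b \<longrightarrow> p_frobenius 2 [a,b,c] = int ((qn-1)*b + (rn+2)*c) - int a) \<and>
      (int qn * int b < int t * int a \<longrightarrow> p_frobenius 2 [a,b,c] = int ((s-1)*b + (rn+1)*c) - int a)"
  proof -
    assume "int rn \<ge> 2"
    then have rn2: "rn \<ge> 2" and h: "2*s \<le> a - 1" using r2 by simp_all
    then have ki: "k \<le> i" using iff by simp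
    have rs: "rn * s \<le> a - 1" unfolding rn_def by (rule div_times_less_eq_dividend)
    have ml: "(a - 1) mod s < s" using s1 by simp
    have dm: "rn * s + (a-1) mod s = a - 1" unfolding rn_def by (rule div_mult_mod_eq)
    have "(rn+1)*s = rn*s + s" by simp
    then have rs2: "a - 1 < (rn+1)*s" using ml dm by linarith
    have aq: "a = rn*s + qn" and q1: "1 \<le> qn" and qs: "qn \<le> s" unfolding qn_def using rs rs2 a1 by (simp_all add: algebra_simps)
    have rel: "c + t*a = s*b" unfolding a_def b_def c_def s_def t_def by (rule relk) (use hk in simp)
    have cop: "coprime a b" unfolding a_def b_def by (rule coprime_lucas2)
    have tB: "t \<le> B" unfolding t_def using F(2)[symmetric] ki by (simp add: fib_mono)
    have ts: "t \<le> s" unfolding t_def s_def by (rule fib_mono) simp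
    have ba: "3*t + a \<le> b" "2*a \<le> b" unfolding a_def b_def using L tB by simp_all
    have "rn*s \<le> a" using rs by linarith
    then have h1: "rn*s*t \<le> a*t" by (rule mult_le_mono1)
    have h2: "a*t \<le> a*s" using ts by (rule mult_le_mono2)
    have "3*t \<le> b - a" using ba by linarith
    then have h3: "3*t*s \<le> (b - a)*s" by (rule mult_le_mono1)
    have "(rn+3)*t*s = rn*s*t + 3*t*s" by (simp add: algebra_simps)
    also have "\<dots> \<le> a*s + (b-a)*s" using h1 h2 h3 by linarith
    also have "\<dots> = b*s" using ba by (simp add: algebra_simps)
    finally have bt: "(rn+3)*t \<le> b" using s1 by simp
    have sb: "2*(t*a) \<le> s*b"
    proof -
      have "t*(2*a) \<le> s*b" using ts ba(2) by (rule mult_le_mono)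
      then show ?thesis by (simp add: algebra_simps)
    qed
    note F1 = caseF[OF aq q1 qs rn2 rel cop bt sb t1]
    show ?thesis
    proof (intro conjI impI)
      assume "int t * int a \<le> int qn * int b"
      then have "t*a \<le> qn*b" by (metis of_nat_le_iff of_nat_mult)
      then show "p_frobenius 2 [a,b,c] = int ((qn-1)*b + (rn+2)*c) - int a" by (rule F1(1))
    next
      assume "int qn * int b < int t * int a"
      then have "qn*b < t*a" by (metis of_nat_less_iff of_nat_mult)
      then show "p_frobenius 2 [a,b,c] = int ((s-1)*b + (rn+1)*c) - int a" by (rule F1(2))
    qed
  qed
  have qI: "int rn \<ge> 2 \<Longrightarrow> int a - int rn * int s = int qn"
  proof -
    assume "int rn \<ge> 2"
    have "rn * s \<le> a - 1" unfolding rn_def by (rule div_times_less_eq_dividend)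
    then show ?thesis unfolding qn_def by (simp add: of_nat_diff)
  qed
  show ?thesis
    unfolding Let_def rI
  proof (intro conjI impI)
    show "(2 \<le> int rn) = (k \<le> i \<and> (i, k) \<noteq> (3, 3))" using r2 iff by simp
  next
    assume r: "2 \<le> int rn"
    assume c1: "int (fib (k-2)) * int (lucas i) \<le> (int (lucas i) - int rn * int (fib k)) * int (lucas (i+2))"
    have "rn * s \<le> a - 1" unfolding rn_def by (rule div_times_less_eq_dividend)
    then have q1: "qn \<ge> 1" unfolding qn_def using a1 by linarith
    have cc: "int t * int a \<le> int qn * int b" using c1 qI[OF r] unfolding a_def b_def s_def t_def by simp
    have P: "p_frobenius 2 [a,b,c] = int ((qn-1)*b + (rn+2)*c) - int a" using main[OF r] cc by blast
    have E: "int ((qn-1)*b + (rn+2)*c) = (int qn - 1)*int b + (int rn + 2)*int c"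
      unfolding of_nat_add of_nat_mult of_nat_diff[OF q1] by simp
    have qI': "int qn = int a - int rn * int s" using qI[OF r] unfolding a_def s_def by simp
    have "p_frobenius 2 [a,b,c] = (int a - int rn * int s - 1)*int b + (int rn + 2)*int c - int a"
      using P unfolding E qI' .
    then show "p_frobenius 2 [lucas i, lucas (i+2), lucas (i+k)]
               = (int (lucas i) - int rn * int (fib k) - 1) * int (lucas (i+2)) + (int rn + 2) * int (lucas (i+k)) - int (lucas i)"
      unfolding a_def b_def c_def s_def .
  next
    assume r: "2 \<le> int rn"
    assume c2: "(int (lucas i) - int rn * int (fib k)) * int (lucas (i+2)) < int (fib (k-2)) * int (lucas i)"
    show "p_frobenius 2 [lucas i, lucas (i+2), lucas (i+k)]
               = (int (fib k) - 1) * int (lucas (i+2)) + (int rn + 1) * int (lucas (i+k)) - int (lucas i)"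
    proof -
      have cc: "int qn * int b < int t * int a" using c2 qI[OF r] unfolding a_def b_def s_def t_def by simp
      have P: "p_frobenius 2 [a,b,c] = int ((s-1)*b + (rn+1)*c) - int a" using main[OF r] cc by blast
      have E: "int ((s-1)*b + (rn+1)*c) = (int s - 1)*int b + (int rn + 1)*int c"
        unfolding of_nat_add of_nat_mult of_nat_diff[OF s1] by simp
      show ?thesis using P unfolding E unfolding a_def b_def c_def s_def .
    qed
  qed
qed


theorem theorem7:
  fixes i k :: nat
  assumes hi: "i \<ge> 3" and hk: "k \<ge> 3"
  defines "L \<equiv> \<lambda>n. int (lucas n)" and "F \<equiv> \<lambda>n. int (fib n)"
  shows
    "(k \<ge> i + 4 \<longrightarrow>
        p_frobenius 2 [lucas i, lucas (i+2), lucas (i+k)] = (3 * L i - 1) * L (i+2) - L i)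
   \<and> p_frobenius 2 [lucas i, lucas (i+2), lucas (2*i+3)] = (L i - 1) * L (i+2) + L (2*i+3) - L i
   \<and> (odd i \<longrightarrow>
        p_frobenius 2 [lucas i, lucas (i+2), lucas (2*i+2)] = (L i - 1) * L (i+2) + L (2*i+2) - L i)
   \<and> (even i \<longrightarrow>
        p_frobenius 2 [lucas i, lucas (i+2), lucas (2*i+2)] = (2 * L i - 1) * L (i+2) - L i)
   \<and> p_frobenius 2 [lucas i, lucas (i+2), lucas (2*i+1)]
        = (2 * F (i-1) - 1) * L (i+2) + 2 * L (2*i+1) - L i
   \<and> p_frobenius 2 [lucas 3, lucas 5, lucas 6] = L 5 + 3 * L 6 - L 3
   \<and> L 5 + 3 * L 6 - L 3 = 61
   \<and> (let r = (L i - 1) div F k in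
        (r \<ge> 2 \<longleftrightarrow> k \<le> i \<and> (i, k) \<noteq> (3, 3))
      \<and> (r \<ge> 2 \<longrightarrow>
          ((L i - r * F k) * L (i+2) \<ge> F (k-2) * L i \<longrightarrow>
             p_frobenius 2 [lucas i, lucas (i+2), lucas (i+k)]
               = (L i - r * F k - 1) * L (i+2) + (r + 2) * L (i+k) - L i)
        \<and> ((L i - r * F k) * L (i+2) < F (k-2) * L i \<longrightarrow>
             p_frobenius 2 [lucas i, lucas (i+2), lucas (i+k)]
               = (F k - 1) * L (i+2) + (r + 1) * L (i+k) - L i)))"
  proof -
  have v61: "int (lucas 5) + 3 * int (lucas 6) - int (lucas 3) = 61" by (simp add: numeral_eq_Suc)
  have e: "p_frobenius 2 [lucas 3, lucas 5, lucas 6] = int (lucas 5) + 3 * int (lucas 6) - int (lucas 3)"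
    using partE v61 by simp
  show ?thesis unfolding L_def F_def
    using partA[OF hi] partB[OF hi] partC[OF hi] partD[OF hi] e v61 partF[OF hi hk] by blast
qed

end
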